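(* Let $N\geq 1$ and let $w,h$ be positive integers satisfying $N/h\leq w\leq N-h+1$ (equivalently $N/w\leq h\leq N-w+1$). Then every $(w,h)$-separable state $\hat\rho$ of $N$ qubits satisfies, for every unit vector $\mathbf{n}\in\mathbb{R}^3$, $$F_Q[\hat\rho,\hat J_{\mathbf n}]\leq w(N-h)+N .$$
   Context: Consider $N$ qubits labelled $1,\dots,N$. For a unit vector $\mathbf n\in\mathbb R^3$, $\hat J_{\mathbf n}=\frac12\sum_{i=1}^N \mathbf n\cdot\hat{\boldsymbol\sigma}^{(i)}$, where $\hat{\boldsymbol\sigma}^{(i)}=(\hat\sigma_x^{(i)},\hat\sigma_y^{(i)},\hat\sigma_z^{(i)})$ are the Pauli matrices of qubit $i$. For a density matrix $\hat\rho=\sum_k\lambda_k|k\rangle\langle k|$ and Hermitian $\hat A$, the quantum Fisher information is $F_Q[\hat\rho,\hat A]=2\sum_{k,l:\lambda_k+\lambda_l>0}\frac{(\lambda_k-\lambda_l)^2}{\lambda_k+\lambda_l}|\langle k|\hat A|l\rangle|^2$. A partition $\Lambda=\{A_1,\dots,A_{|\Lambda|}\}$ of $\{1,\dots,N\}$ into nonempty disjoint subsets has $|\Lambda|$ subsets of sizes $N_l=|A_l|$ and $\max\Lambda=\max_l N_l$. A state is $\Lambda$-separable if it can be written as $\sum_\gamma p_\gamma\hat\rho^{(\gamma)}_{A_1}\otimes\cdots\otimes\hat\rho^{(\gamma)}_{A_{|\Lambda|}}$ with $p_\gamma$ a probability distribution and $\hat\rho^{(\gamma)}_{A_l}$ states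 of the qubits in $A_l$. A state is $(w,h)$-separable if it is a convex combination $\sum_\Lambda P_\Lambda\hat\rho_\Lambda$ of $\Lambda$-separable states $\hat\rho_\Lambda$ over partitions $\Lambda$ with $\max\Lambda\leq w$ and $|\Lambda|\geq h$. *)

theory Defs
  imports "HOL-Analysis.Analysis"
begin

text \<open>Computational basis configurations of qubits: a configuration is a function
  nat => bool (False = |0>, True = |1>) which is False outside the given set of qubits.
  An operator on the qubits in A is a kernel cfg => cfg => complex, considered on configs A.\<close>

type_synonym cfg = "nat \<Rightarrow> bool"
type_synonym qop = "cfg \<Rightarrow> cfg \<Rightarrow> complex"

definition configs :: "nat set \<Rightarrow> cfg set" where
  "configs A = {x. \<forall>i. i \<notin> A \<longrightarrow> \<not> x i}"

definition restr :: "cfg \<Rightarrow> nat set \<Rightarrow> cfg" where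
  "restr x A = (\<lambda>i. if i \<in> A then x i else False)"

definition is_state :: "nat set \<Rightarrow> qop \<Rightarrow> bool" where
  "is_state A \<rho> \<longleftrightarrow>
     (\<forall>v :: cfg \<Rightarrow> complex.
        let q = (\<Sum>x\<in>configs A. \<Sum>y\<in>configs A. cnj (v x) * \<rho> x y * v y)
        in Im q = 0 \<and> Re q \<ge> 0)
   \<and> (\<Sum>x\<in>configs A. \<rho> x x) = 1"

definition is_partition :: "nat \<Rightarrow> nat set set \<Rightarrow> bool" where
  "is_partition N \<Lambda> \<longleftrightarrow>
     (\<forall>A\<in>\<Lambda>. A \<noteq> {}) \<and> (\<forall>A\<in>\<Lambda>. \<forall>B\<in>\<Lambda>. A \<noteq> B \<longrightarrow> A \<inter> B = {}) \<and> \<Union>\<Lambda> = {1..N}"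

definition max_block :: "nat set set \<Rightarrow> nat" where
  "max_block \<Lambda> = Max (card ` \<Lambda>)"

text \<open>Tensor product over the blocks of a partition: the kernel of the product
  of states rho_A on the blocks A.\<close>
definition prod_op :: "nat set set \<Rightarrow> (nat set \<Rightarrow> qop) \<Rightarrow> qop" where
  "prod_op \<Lambda> r = (\<lambda>x y. \<Prod>A\<in>\<Lambda>. r A (restr x A) (restr y A))"

definition sep_wrt :: "nat \<Rightarrow> nat set set \<Rightarrow> qop \<Rightarrow> bool" where
  "sep_wrt N \<Lambda> \<rho> \<longleftrightarrow>
     (\<exists>(G :: nat set) (p :: nat \<Rightarrow> real) (r :: nat \<Rightarrow> nat set \<Rightarrow> qop).
        finite G \<and> (\<forall>g\<in>G. p g \<ge> 0) \<and> (\<Sum>g\<in>G. p g) = 1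
      \<and> (\<forall>g\<in>G. \<forall>A\<in>\<Lambda>. is_state A (r g A))
      \<and> (\<forall>x\<in>configs {1..N}. \<forall>y\<in>configs {1..N}.
            \<rho> x y = (\<Sum>g\<in>G. complex_of_real (p g) * prod_op \<Lambda> (r g) x y)))"

definition wh_sep :: "nat \<Rightarrow> nat \<Rightarrow> nat \<Rightarrow> qop \<Rightarrow> bool" where
  "wh_sep N w h \<rho> \<longleftrightarrow>
     (\<exists>(K :: nat set) (P :: nat \<Rightarrow> real) (L :: nat \<Rightarrow> nat set set) (s :: nat \<Rightarrow> qop).
        finite K \<and> (\<forall>k\<in>K. P k \<ge> 0) \<and> (\<Sum>k\<in>K. P k) = 1
      \<and> (\<forall>k\<in>K. is_partition N (L k) \<and> max_block (L k) \<le> w \<and> card (L k) \<ge> h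
                 \<and> sep_wrt N (L k) (s k))
      \<and> (\<forall>x\<in>configs {1..N}. \<forall>y\<in>configs {1..N}.
            \<rho> x y = (\<Sum>k\<in>K. complex_of_real (P k) * s k x y)))"

text \<open>n . sigma as a 2x2 matrix, rows/columns indexed by bool (False = |0>, True = |1>),
  with sigma_z |0> = |0>.\<close>
definition pauli_n :: "real^3 \<Rightarrow> bool \<Rightarrow> bool \<Rightarrow> complex" where
  "pauli_n n a b =
     (if \<not> a \<and> \<not> b then complex_of_real (n$3)
      else if \<not> a \<and> b then Complex (n$1) (- n$2)
      else if a \<and> \<not> b then Complex (n$1) (n$2)
      else complex_of_real (- n$3))"

text \<open>J_n = 1/2 sum_{i=1..N} n . sigma^(i).\<close>
definition J_op :: "nat \<Rightarrow> real^3 \<Rightarrow> qop" where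
  "J_op N n = (\<lambda>x y. (1/2) * (\<Sum>i\<in>{1..N}.
      (if \<forall>j. j \<noteq> i \<longrightarrow> x j = y j then pauli_n n (x i) (y i) else 0)))"

definition is_eigdec :: "nat \<Rightarrow> qop \<Rightarrow> (cfg \<Rightarrow> cfg \<Rightarrow> complex) \<Rightarrow> (cfg \<Rightarrow> real) \<Rightarrow> bool" where
  "is_eigdec N \<rho> e lam \<longleftrightarrow>
     (\<forall>k\<in>configs {1..N}. \<forall>l\<in>configs {1..N}.
        (\<Sum>x\<in>configs {1..N}. cnj (e k x) * e l x) = (if k = l then 1 else 0))
   \<and> (\<forall>x\<in>configs {1..N}. \<forall>y\<in>configs {1..N}.
        \<rho> x y = (\<Sum>k\<in>configs {1..N}. complex_of_real (lam k) * e k x * cnj (e k y)))"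

definition melem :: "nat \<Rightarrow> (cfg \<Rightarrow> complex) \<Rightarrow> qop \<Rightarrow> (cfg \<Rightarrow> complex) \<Rightarrow> complex" where
  "melem N u A v = (\<Sum>x\<in>configs {1..N}. \<Sum>y\<in>configs {1..N}. cnj (u x) * A x y * v y)"

definition QFI :: "nat \<Rightarrow> qop \<Rightarrow> qop \<Rightarrow> real" where
  "QFI N \<rho> A =
     (let d = (SOME d. is_eigdec N \<rho> (fst d) (snd d)); e = fst d; lam = snd d in
      2 * (\<Sum>k\<in>configs {1..N}. \<Sum>l\<in>configs {1..N}.
             if lam k + lam l > 0
             then (lam k - lam l)^2 / (lam k + lam l) * (cmod (melem N (e k) A (e l)))^2
             else 0))"

end

theory Submission
  imports Defs "Jordan_Normal_Form.Spectral_Radius"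
begin

lemma eigvec_exists:
  fixes M :: "'a \<Rightarrow> 'a \<Rightarrow> complex"
  assumes fin: "finite S" and ne: "S \<noteq> {}"
  shows "\<exists>u c. (\<exists>x\<in>S. u x \<noteq> 0) \<and> (\<forall>x\<in>S. (\<Sum>y\<in>S. M x y * u y) = c * u x)"
proof -
  define n where "n = card S"
  obtain g where g: "bij_betw g {0..<n} S" using ex_bij_betw_nat_finite[OF fin] n_def by auto
  define A where "A = mat n n (\<lambda>(i,j). M (g i) (g j))"
  have A: "A \<in> carrier_mat n n" by (simp add: A_def)
  have "n > 0" using fin ne n_def by (simp add: card_gt_0_iff)
  from spectrum_non_empty[OF A this] obtain c where "eigenvalue A c" unfolding spectrum_def by auto
  then obtain v where ev: "eigenvector A v c" unfolding eigenvalue_def by auto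
  hence v: "v \<in> carrier_vec n" "v \<noteq> 0\<^sub>v n" "A *\<^sub>v v = c \<cdot>\<^sub>v v" unfolding eigenvector_def using A by auto
  define gi where "gi = the_inv_into {0..<n} g"
  have gi1: "gi (g j) = j" if "j < n" for j
    using g that unfolding gi_def bij_betw_def by (simp add: the_inv_into_f_f)
  have gi2: "g (gi x) = x" "gi x < n" if "x \<in> S" for x
    using g that unfolding gi_def bij_betw_def
    by (auto simp: f_the_inv_into_f the_inv_into_f_f)
  define u where "u = (\<lambda>x. v $ gi x)"
  show ?thesis
  proof (intro exI conjI)
    from v(2) obtain i where i: "i < n" "v $ i \<noteq> 0" using v(1)
      by (metis carrier_vecD eq_vecI index_zero_vec(1) index_zero_vec(2))
    show "\<exists>x\<in>S. u x \<noteq> 0"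
      using i gi1 g unfolding u_def bij_betw_def by (intro bexI[of _ "g i"]) auto
    show "\<forall>x\<in>S. (\<Sum>y\<in>S. M x y * u y) = c * u x"
    proof
      fix x assume x: "x \<in> S"
      have "(\<Sum>y\<in>S. M x y * u y) = (\<Sum>j\<in>{0..<n}. M x (g j) * u (g j))"
        by (rule sum.reindex_bij_betw[OF g, symmetric])
      also have "\<dots> = (\<Sum>j\<in>{0..<n}. A $$ (gi x, j) * v $ j)"
        using gi1 gi2[OF x] by (intro sum.cong) (auto simp: A_def u_def)
      also have "\<dots> = (A *\<^sub>v v) $ gi x"
        using A v(1) gi2[OF x] by (simp add: mult_mat_vec_def scalar_prod_def)
      also have "\<dots> = c * u x" using v(3) v(1) gi2[OF x] by (simp add: u_def)
      finally show "(\<Sum>y\<in>S. M x y * u y) = c * u x" .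
    qed
  qed
qed

lemma cnj_mult_self: "cnj z * z = complex_of_real ((cmod z)^2)"
  using complex_norm_square[of z] by (simp add: mult.commute)

lemma sum_delta_r2: "finite S \<Longrightarrow> (\<Sum>a\<in>S. (f a :: complex) * (if x = a then 1 else 0)) = (if x \<in> S then f x else 0)"
proof -
  assume fin: "finite S"
  have "(\<Sum>a\<in>S. f a * (if x = a then 1 else 0)) = (\<Sum>a\<in>S. if x = a then f a else 0)"
    by (rule sum.cong, auto)
  then show ?thesis using fin by (simp add: sum.delta)
qed

lemma sum_delta_r3: "finite S \<Longrightarrow> a \<in> S \<Longrightarrow> (\<Sum>b\<in>S. c * (g b * (if a = b then 1 else 0))) = (c::complex) * g a"
proof -
  assume fin: "finite S" and a: "a \<in> S"
  have "(\<Sum>b\<in>S. c * (g b * (if a = b then 1 else 0))) = (\<Sum>b\<in>S. if a = b then c * g b else 0)"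
    by (rule sum.cong, auto)
  then show ?thesis using fin a by (simp add: sum.delta)
qed

lemma mult_cnj_cmod: "z * cnj z = complex_of_real (cmod z) * complex_of_real (cmod z)"
  by (metis complex_norm_square of_real_mult power2_eq_square)

lemma sum_delta_l: "finite S \<Longrightarrow> (\<Sum>a\<in>S. (if x = a then 1 else 0) * (f a :: complex)) = (if x \<in> S then f x else 0)"
proof -
  assume fin: "finite S"
  have "(\<Sum>a\<in>S. (if x = a then 1 else 0) * f a) = (\<Sum>a\<in>S. if x = a then f a else 0)"
    by (rule sum.cong, auto)
  then show ?thesis using fin by (simp add: sum.delta)
qed

lemma sum_delta_r: "finite S \<Longrightarrow> (\<Sum>a\<in>S. (f a :: complex) * (if a = x then 1 else 0)) = (if x \<in> S then f x else 0)"
proof -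
  assume fin: "finite S"
  have "(\<Sum>a\<in>S. f a * (if a = x then 1 else 0)) = (\<Sum>a\<in>S. if a = x then f a else 0)"
    by (rule sum.cong, auto)
  then show ?thesis using fin by (simp add: sum.delta')
qed

lemma left_unit:
  fixes H :: "'a \<Rightarrow> 'a \<Rightarrow> complex"
  assumes fin: "finite S" and U: "\<And>x y. x \<in> S \<Longrightarrow> y \<in> S \<Longrightarrow> (\<Sum>a\<in>S. H x a * H a y) = (if x = y then 1 else 0)"
    and x: "x \<in> S"
  shows "(\<Sum>a\<in>S. H x a * (\<Sum>c\<in>S. H a c * N c)) = N x"
proof -
  have "(\<Sum>a\<in>S. H x a * (\<Sum>c\<in>S. H a c * N c)) = (\<Sum>a\<in>S. \<Sum>c\<in>S. H x a * H a c * N c)"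
    by (simp add: sum_distrib_left mult.assoc)
  also have "\<dots> = (\<Sum>c\<in>S. \<Sum>a\<in>S. H x a * H a c * N c)" by (rule sum.swap)
  also have "\<dots> = (\<Sum>c\<in>S. (\<Sum>a\<in>S. H x a * H a c) * N c)" by (simp add: sum_distrib_right)
  also have "\<dots> = (\<Sum>c\<in>S. (if x = c then 1 else 0) * N c)" using U x by simp
  also have "\<dots> = N x" using fin x by (simp add: sum_delta_l)
  finally show ?thesis .
qed

lemma right_unit:
  fixes H :: "'a \<Rightarrow> 'a \<Rightarrow> complex"
  assumes fin: "finite S" and U: "\<And>x y. x \<in> S \<Longrightarrow> y \<in> S \<Longrightarrow> (\<Sum>a\<in>S. H x a * H a y) = (if x = y then 1 else 0)"
    and y: "y \<in> S"
  shows "(\<Sum>b\<in>S. (\<Sum>d\<in>S. N d * H d b) * H b y) = N y"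
proof -
  have "(\<Sum>b\<in>S. (\<Sum>d\<in>S. N d * H d b) * H b y) = (\<Sum>b\<in>S. \<Sum>d\<in>S. N d * H d b * H b y)"
    by (simp add: sum_distrib_right)
  also have "\<dots> = (\<Sum>d\<in>S. \<Sum>b\<in>S. N d * H d b * H b y)" by (rule sum.swap)
  also have "\<dots> = (\<Sum>d\<in>S. N d * (\<Sum>b\<in>S. H d b * H b y))" by (simp add: sum_distrib_left mult.assoc)
  also have "\<dots> = (\<Sum>d\<in>S. N d * (if d = y then 1 else 0))" using U y by simp
  also have "\<dots> = N y" using fin y by (simp add: sum_delta_r)
  finally show ?thesis .
qed

lemma cnj_ip_swap: "(\<Sum>x\<in>S. cnj (v x) * w x) = cnj (\<Sum>x\<in>S. cnj (w x) * v x)"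
  by (simp add: mult.commute)

lemma spectral_ind:
  fixes M :: "'a \<Rightarrow> 'a \<Rightarrow> complex"
  shows "finite S \<Longrightarrow> card S = n \<Longrightarrow> (\<forall>x\<in>S. \<forall>y\<in>S. M x y = cnj (M y x)) \<Longrightarrow>
   \<exists>e lam. (\<forall>k\<in>S. \<forall>l\<in>S. (\<Sum>x\<in>S. cnj (e k x) * e l x) = (if k = l then 1 else 0)) \<and>
     (\<forall>x\<in>S. \<forall>y\<in>S. M x y = (\<Sum>k\<in>S. complex_of_real (lam k) * e k x * cnj (e k y)))"
proof (induction n arbitrary: S M)
  case 0
  then have "S = {}" by simp
  then show ?case by simp
next
  case (Suc n S M)
  have fin: "finite S" and cardS: "card S = Suc n" and herm: "\<And>x y. x\<in>S \<Longrightarrow> y\<in>S \<Longrightarrow> M x y = cnj (M y x)"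
    using Suc.prems by blast+
  have ne: "S \<noteq> {}" using cardS by auto
  obtain u0 c where u0nz: "\<exists>x\<in>S. u0 x \<noteq> 0" and eig0: "\<And>x. x\<in>S \<Longrightarrow> (\<Sum>y\<in>S. M x y * u0 y) = c * u0 x"
    using eigvec_exists[OF fin ne, of M] by blast
  define q where "q = (\<Sum>x\<in>S. (cmod (u0 x))^2)"
  have qpos: "q > 0"
  proof -
    from u0nz obtain x where x: "x \<in> S" "u0 x \<noteq> 0" by blast
    have "(cmod (u0 x))^2 \<le> q" unfolding q_def
      by (rule member_le_sum[OF x(1)]) (auto simp: fin)
    moreover have "(cmod (u0 x))^2 > 0" using x by simp
    ultimately show ?thesis by linarith
  qed
  define u where "u = (\<lambda>x. u0 x / complex_of_real (sqrt q))"
  have unorm: "(\<Sum>x\<in>S. cnj (u x) * u x) = 1"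
  proof -
    have "(\<Sum>x\<in>S. cnj (u x) * u x) = (\<Sum>x\<in>S. cnj (u0 x) * u0 x) / complex_of_real q"
      unfolding u_def using qpos
      by (simp add: sum_divide_distrib power2_eq_square[symmetric] flip: of_real_power)
    also have "(\<Sum>x\<in>S. cnj (u0 x) * u0 x) = complex_of_real q"
      unfolding q_def by (simp add: cnj_mult_self)
    finally show ?thesis using qpos by simp
  qed
  have eig: "\<And>x. x\<in>S \<Longrightarrow> (\<Sum>y\<in>S. M x y * u y) = c * u x"
  proof -
    fix x assume x: "x \<in> S"
    have "(\<Sum>y\<in>S. M x y * u y) = (\<Sum>y\<in>S. M x y * u0 y) / complex_of_real (sqrt q)"
      unfolding u_def by (simp add: sum_divide_distrib)
    then show "(\<Sum>y\<in>S. M x y * u y) = c * u x" using eig0[OF x] by (simp add: u_def)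
  qed
  have creal: "cnj c = c"
  proof -
    define z where "z = (\<Sum>x\<in>S. cnj (u x) * (\<Sum>y\<in>S. M x y * u y))"
    have "z = (\<Sum>x\<in>S. cnj (u x) * (c * u x))" unfolding z_def
      by (rule sum.cong, simp_all add: eig)
    also have "\<dots> = c * (\<Sum>x\<in>S. cnj (u x) * u x)"
      by (simp add: sum_distrib_left mult.left_commute)
    finally have z1: "z = c" using unorm by simp
    have "cnj z = (\<Sum>x\<in>S. \<Sum>y\<in>S. u x * cnj (M x y) * cnj (u y))"
      unfolding z_def by (simp add: sum_distrib_left mult.assoc)
    also have "\<dots> = (\<Sum>x\<in>S. \<Sum>y\<in>S. u x * M y x * cnj (u y))"
      using herm by (intro sum.cong refl) (metis complex_cnj_cnj)
    also have "\<dots> = z" unfolding z_def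
      by (subst sum.swap) (simp add: sum_distrib_left mult.commute mult.left_commute)
    finally show ?thesis using z1 by simp
  qed
  obtain x0 where x0: "x0 \<in> S" "u x0 \<noteq> 0"
    using u0nz qpos unfolding u_def by auto
  define r where "r = cmod (u x0)"
  have rpos: "r > 0" using x0 unfolding r_def by simp
  define \<alpha> where "\<alpha> = u x0 / complex_of_real r"
  have \<alpha>1: "cnj \<alpha> * \<alpha> = 1"
    unfolding \<alpha>_def r_def using x0 by (simp add: mult_cnj_cmod field_simps)
  have \<alpha>u: "cnj \<alpha> * u x0 = complex_of_real r"
    unfolding \<alpha>_def r_def using x0 by (simp add: mult_cnj_cmod field_simps)
  have \<alpha>u': "\<alpha> * cnj (u x0) = complex_of_real r"
    using arg_cong[OF \<alpha>u, of cnj] by simp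
  define w where "w = (\<lambda>x. \<alpha> * (if x = x0 then 1 else 0) - u x)"
  define ww where "ww = (\<Sum>x\<in>S. cnj (w x) * w x)"
  have ww: "ww = complex_of_real (2 - 2 * r)"
  proof -
    have "ww = (\<Sum>x\<in>S. (if x = x0 then cnj \<alpha> * \<alpha> - cnj \<alpha> * u x - \<alpha> * cnj (u x) else 0))
        + (\<Sum>x\<in>S. cnj (u x) * u x)"
      unfolding ww_def w_def sum.distrib[symmetric] by (rule sum.cong, auto simp: algebra_simps)
    also have "\<dots> = cnj \<alpha> * \<alpha> - cnj \<alpha> * u x0 - \<alpha> * cnj (u x0) + 1"
      using fin x0 unorm by (simp add: sum.delta')
    finally show ?thesis using \<alpha>1 \<alpha>u \<alpha>u' by simp
  qed
  define \<beta> where "\<beta> = (if ww = 0 then 0 else 2 / ww)"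
  have \<beta>real: "cnj \<beta> = \<beta>" unfolding \<beta>_def ww by simp
  have \<beta>2: "\<beta> * \<beta> * ww = 2 * \<beta>" unfolding \<beta>_def by (simp add: field_simps)
  define H where "H = (\<lambda>x y. (if x = y then 1 else 0) - \<beta> * w x * cnj (w y))"
  have Hherm: "\<And>x y. H y x = cnj (H x y)" unfolding H_def using \<beta>real by simp
  have Hunit: "\<And>x y. x \<in> S \<Longrightarrow> y \<in> S \<Longrightarrow> (\<Sum>a\<in>S. H x a * H a y) = (if x = y then 1 else 0)"
  proof -
    fix x y assume x: "x \<in> S" and y: "y \<in> S"
    have "(\<Sum>a\<in>S. H x a * H a y) = (\<Sum>a\<in>S. (if x = a then 1 else 0) * (if a = y then 1 else 0)
         - (if x = a then 1 else 0) * (\<beta> * w a * cnj (w y)) - \<beta> * w x * cnj (w a) * (if a = y then 1 else 0)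
         + \<beta> * \<beta> * w x * cnj (w y) * (cnj (w a) * w a))"
      unfolding H_def by (rule sum.cong, auto simp: algebra_simps)
    also have "\<dots> = (if x = y then 1 else 0) - \<beta> * w x * cnj (w y) - \<beta> * w x * cnj (w y)
         + \<beta> * \<beta> * w x * cnj (w y) * ww"
      using fin x y unfolding ww_def
      by (simp add: sum.distrib sum_subtractf sum_delta_l sum_delta_r sum_distrib_left[symmetric])
    also have "\<dots> = (if x = y then 1 else 0)"
      using \<beta>2 by (simp add: algebra_simps, blast)
    finally show "(\<Sum>a\<in>S. H x a * H a y) = (if x = y then 1 else 0)" .
  qed
  have cux0: "cnj (u x0) = cnj \<alpha> * complex_of_real r"
  proof -
    have "cnj \<alpha> * (\<alpha> * cnj (u x0)) = cnj \<alpha> * complex_of_real r" using \<alpha>u' by simp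
    then show ?thesis using \<alpha>1 by (simp add: mult.assoc[symmetric])
  qed
  have Hx0: "\<And>x. x \<in> S \<Longrightarrow> H x x0 = cnj \<alpha> * u x"
  proof -
    fix x assume x: "x \<in> S"
    show "H x x0 = cnj \<alpha> * u x"
    proof (cases "ww = 0")
      case True
      have "ww = (\<Sum>x\<in>S. complex_of_real ((cmod (w x))^2))" unfolding ww_def
        by (rule sum.cong[OF refl], rule cnj_mult_self)
      also have "\<dots> = complex_of_real (\<Sum>x\<in>S. (cmod (w x))^2)" by (rule of_real_sum[symmetric])
      finally have "(\<Sum>x\<in>S. (cmod (w x))^2) = 0" using True by (metis of_real_eq_0_iff)
      then have "\<forall>x\<in>S. (cmod (w x))^2 = 0" using fin by (simp add: sum_nonneg_eq_0_iff)
      then have "w x = 0" using x by simp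
      then have "u x = \<alpha> * (if x = x0 then 1 else 0)" unfolding w_def by simp
      then show ?thesis using True \<alpha>1 unfolding H_def \<beta>_def by simp
    next
      case False
      then have r1: "r \<noteq> 1" using ww by auto
      have "\<beta> * cnj (w x0) = cnj \<alpha>"
        using False r1 unfolding \<beta>_def ww w_def
        by (simp add: cux0 field_simps)
      then have "H x x0 = (if x = x0 then 1 else 0) - cnj \<alpha> * w x"
        unfolding H_def by (simp add: algebra_simps)
      then show ?thesis unfolding w_def using \<alpha>1 by (simp add: right_diff_distrib mult.assoc[symmetric])
    qed
  qed
  have uH: "\<And>a. a \<in> S \<Longrightarrow> u a = \<alpha> * H a x0"
    using Hx0 \<alpha>1 by (simp add: mult.assoc[symmetric] mult.commute)
  have Hu: "\<And>x. x \<in> S \<Longrightarrow> (\<Sum>a\<in>S. H x a * u a) = \<alpha> * (if x = x0 then 1 else 0)"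
  proof -
    fix x assume x: "x \<in> S"
    have "(\<Sum>a\<in>S. H x a * u a) = \<alpha> * (\<Sum>a\<in>S. H x a * H a x0)"
      by (simp add: sum_distrib_left uH mult.left_commute cong: sum.cong)
    then show "(\<Sum>a\<in>S. H x a * u a) = \<alpha> * (if x = x0 then 1 else 0)"
      using Hunit[OF x x0(1)] by simp
  qed
  define M' where "M' = (\<lambda>x y. \<Sum>a\<in>S. \<Sum>b\<in>S. H x a * M a b * H b y)"
  have M'herm: "\<And>x y. M' x y = cnj (M' y x)"
  proof -
    fix x y
    have "cnj (M' y x) = (\<Sum>a\<in>S. \<Sum>b\<in>S. cnj (H y a) * cnj (M a b) * cnj (H b x))"
      unfolding M'_def by simp
    also have "\<dots> = (\<Sum>a\<in>S. \<Sum>b\<in>S. H a y * M b a * H x b)"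
      by (intro sum.cong refl, metis Hherm herm)
    also have "\<dots> = M' x y" unfolding M'_def
      by (subst sum.swap, simp add: mult.commute mult.left_commute)
    finally show "M' x y = cnj (M' y x)" by simp
  qed
  have M'col: "\<And>y. y \<in> S \<Longrightarrow> M' y x0 = c * (if y = x0 then 1 else 0)"
  proof -
    fix y assume y: "y \<in> S"
    have inner: "\<And>a. a \<in> S \<Longrightarrow> (\<Sum>b\<in>S. M a b * H b x0) = cnj \<alpha> * c * u a"
    proof -
      fix a assume a: "a \<in> S"
      have "(\<Sum>b\<in>S. M a b * H b x0) = cnj \<alpha> * (\<Sum>b\<in>S. M a b * u b)"
        using Hx0 by (simp add: sum_distrib_left mult.left_commute)
      then show "(\<Sum>b\<in>S. M a b * H b x0) = cnj \<alpha> * c * u a" using eig[OF a] by simp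
    qed
    have "M' y x0 = (\<Sum>a\<in>S. H y a * (\<Sum>b\<in>S. M a b * H b x0))"
      unfolding M'_def by (simp add: sum_distrib_left mult.assoc)
    also have "\<dots> = (\<Sum>a\<in>S. H y a * (cnj \<alpha> * c * u a))"
      using inner by simp
    also have "\<dots> = cnj \<alpha> * c * (\<Sum>a\<in>S. H y a * u a)"
      by (simp add: sum_distrib_left mult.left_commute)
    also have "\<dots> = c * (if y = x0 then 1 else 0)"
      using Hu[OF y] \<alpha>1 by simp
    finally show "M' y x0 = c * (if y = x0 then 1 else 0)" .
  qed
  have "Im c = 0" using arg_cong[OF creal, of Im] by simp
  then have cR: "complex_of_real (Re c) = c" by (simp add: complex_eq_iff)
  have M'row: "\<And>x. x \<in> S \<Longrightarrow> M' x0 x = c * (if x = x0 then 1 else 0)"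
  proof -
    fix x assume x: "x \<in> S"
    have "M' x0 x = cnj (M' x x0)" by (rule M'herm)
    also have "\<dots> = c * (if x = x0 then 1 else 0)" using M'col[OF x] creal by simp
    finally show "M' x0 x = c * (if x = x0 then 1 else 0)" .
  qed
  define S' where "S' = S - {x0}"
  have finS': "finite S'" and cardS': "card S' = n" using fin cardS x0 unfolding S'_def by simp_all
  have hermS': "\<forall>x\<in>S'. \<forall>y\<in>S'. M' x y = cnj (M' y x)" using M'herm by blast
  obtain e' lam' where orth': "\<forall>k\<in>S'. \<forall>l\<in>S'. (\<Sum>x\<in>S'. cnj (e' k x) * e' l x) = (if k = l then 1 else 0)"
    and dec': "\<forall>x\<in>S'. \<forall>y\<in>S'. M' x y = (\<Sum>k\<in>S'. complex_of_real (lam' k) * e' k x * cnj (e' k y))"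
    using Suc.IH[OF finS' cardS' hermS'] by blast
  define f where "f = (\<lambda>k x. if x \<in> S' then e' k x else 0)"
  have fx0: "\<And>k. f k x0 = 0" unfolding f_def S'_def by simp
  have x0S': "x0 \<notin> S'" unfolding S'_def by simp
  have S'S: "S' \<subseteq> S" unfolding S'_def by blast
  have sumS': "\<And>g. (\<Sum>a\<in>S. g a) = g x0 + (\<Sum>a\<in>S'. g a)"
    using sum.remove[OF fin x0(1)] unfolding S'_def by blast
  define e where "e = (\<lambda>k x. if k = x0 then u x else \<Sum>a\<in>S. H x a * f k a)"
  define lam where "lam = (\<lambda>k. if k = x0 then Re c else lam' k)"
  have HH: "\<And>a b. a \<in> S \<Longrightarrow> b \<in> S \<Longrightarrow> (\<Sum>x\<in>S. cnj (H x a) * H x b) = (if a = b then 1 else 0)"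
  proof -
    fix a b assume a: "a \<in> S" and b: "b \<in> S"
    have "(\<Sum>x\<in>S. cnj (H x a) * H x b) = (\<Sum>x\<in>S. H a x * H x b)"
      by (intro sum.cong refl, metis Hherm)
    then show "(\<Sum>x\<in>S. cnj (H x a) * H x b) = (if a = b then 1 else 0)" using Hunit[OF a b] by simp
  qed
  have uHs: "\<And>a. a \<in> S \<Longrightarrow> (\<Sum>x\<in>S. cnj (u x) * H x a) = cnj \<alpha> * (if a = x0 then 1 else 0)"
  proof -
    fix a assume a: "a \<in> S"
    have "(\<Sum>x\<in>S. cnj (u x) * H x a) = (\<Sum>x\<in>S. cnj (H a x * u x))"
      by (intro sum.cong refl, simp, metis Hherm mult.commute)
    also have "\<dots> = cnj (\<Sum>x\<in>S. H a x * u x)" by (simp only: cnj_sum)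
    also have "\<dots> = cnj \<alpha> * (if a = x0 then 1 else 0)" using Hu[OF a] by simp
    finally show "(\<Sum>x\<in>S. cnj (u x) * H x a) = cnj \<alpha> * (if a = x0 then 1 else 0)" .
  qed
  have ipS': "\<And>k l. k \<in> S' \<Longrightarrow> l \<in> S' \<Longrightarrow> (\<Sum>x\<in>S. cnj (e k x) * e l x) = (\<Sum>a\<in>S'. cnj (e' k a) * e' l a)"
  proof -
    fix k l assume k: "k \<in> S'" and l: "l \<in> S'"
    have "(\<Sum>x\<in>S. cnj (e k x) * e l x) = (\<Sum>x\<in>S. (\<Sum>a\<in>S. cnj (H x a) * cnj (f k a)) * (\<Sum>b\<in>S. H x b * f l b))"
      using k l x0S' unfolding e_def by (auto intro!: sum.cong)
    also have "\<dots> = (\<Sum>x\<in>S. \<Sum>a\<in>S. \<Sum>b\<in>S. (cnj (H x a) * cnj (f k a)) * (H x b * f l b))"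
      by (simp only: sum_product)
    also have "\<dots> = (\<Sum>x\<in>S. \<Sum>a\<in>S. \<Sum>b\<in>S. cnj (f k a) * f l b * (cnj (H x a) * H x b))"
      by (simp add: ac_simps)
    also have "\<dots> = (\<Sum>a\<in>S. \<Sum>b\<in>S. \<Sum>x\<in>S. cnj (f k a) * f l b * (cnj (H x a) * H x b))"
      by (subst sum.swap, rule sum.cong[OF refl], rule sum.swap)
    also have "\<dots> = (\<Sum>a\<in>S. \<Sum>b\<in>S. cnj (f k a) * (f l b * (if a = b then 1 else 0)))"
      using HH by (simp add: sum_distrib_left[symmetric] mult.assoc)
    also have "\<dots> = (\<Sum>a\<in>S. cnj (f k a) * f l a)"
      by (rule sum.cong[OF refl], rule sum_delta_r3[OF fin], assumption)
    also have "\<dots> = (\<Sum>a\<in>S'. cnj (f k a) * f l a)"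
      using sumS'[of "\<lambda>a. cnj (f k a) * f l a"] fx0 by simp
    also have "\<dots> = (\<Sum>a\<in>S'. cnj (e' k a) * e' l a)"
      unfolding f_def by (rule sum.cong, auto)
    finally show "(\<Sum>x\<in>S. cnj (e k x) * e l x) = (\<Sum>a\<in>S'. cnj (e' k a) * e' l a)" .
  qed
  have ipmix: "\<And>l. l \<in> S' \<Longrightarrow> (\<Sum>x\<in>S. cnj (u x) * e l x) = 0"
  proof -
    fix l assume l: "l \<in> S'"
    have "(\<Sum>x\<in>S. cnj (u x) * e l x) = (\<Sum>x\<in>S. \<Sum>a\<in>S. cnj (u x) * H x a * f l a)"
      using l x0S' unfolding e_def by (auto simp: sum_distrib_left mult.assoc intro!: sum.cong)
    also have "\<dots> = (\<Sum>a\<in>S. (\<Sum>x\<in>S. cnj (u x) * H x a) * f l a)"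
      by (subst sum.swap, simp add: sum_distrib_right)
    also have "\<dots> = (\<Sum>a\<in>S. cnj \<alpha> * f l a * (if a = x0 then 1 else 0))"
      using uHs by (simp add: ac_simps)
    also have "\<dots> = 0" using fin x0 fx0 by (simp add: sum_delta_r)
    finally show "(\<Sum>x\<in>S. cnj (u x) * e l x) = 0" .
  qed
  have orth: "\<forall>k\<in>S. \<forall>l\<in>S. (\<Sum>x\<in>S. cnj (e k x) * e l x) = (if k = l then 1 else 0)"
  proof (intro ballI)
    fix k l assume k: "k \<in> S" and l: "l \<in> S"
    show "(\<Sum>x\<in>S. cnj (e k x) * e l x) = (if k = l then 1 else 0)"
    proof (cases "k = x0")
      case True
      show ?thesis
      proof (cases "l = x0")
        case True
        then show ?thesis using \<open>k = x0\<close> unorm unfolding e_def by simp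
      next
        case False
        then have "l \<in> S'" using l unfolding S'_def by blast
        then show ?thesis using ipmix[of l] True False unfolding e_def by simp
      qed
    next
      case False
      then have kS': "k \<in> S'" using k unfolding S'_def by blast
      show ?thesis
      proof (cases "l = x0")
        case True
        have "(\<Sum>x\<in>S. cnj (e k x) * e l x) = cnj (\<Sum>x\<in>S. cnj (u x) * e k x)"
          using True unfolding e_def by (subst cnj_ip_swap, simp)
        then show ?thesis using ipmix[OF kS'] True False by simp
      next
        case False
        then have lS': "l \<in> S'" using l unfolding S'_def by blast
        show ?thesis using ipS'[OF kS' lS'] orth' kS' lS' by simp
      qed
    qed
  qed
  have M'dec: "\<And>a b. a \<in> S \<Longrightarrow> b \<in> S \<Longrightarrow> M' a b = (if a = x0 \<and> b = x0 then c else 0)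
      + (\<Sum>k\<in>S'. complex_of_real (lam' k) * f k a * cnj (f k b))"
  proof -
    fix a b assume a: "a \<in> S" and b: "b \<in> S"
    show "M' a b = (if a = x0 \<and> b = x0 then c else 0) + (\<Sum>k\<in>S'. complex_of_real (lam' k) * f k a * cnj (f k b))"
    proof (cases "a = x0 \<or> b = x0")
      case True
      then show ?thesis using M'col M'row a b fx0 by auto
    next
      case False
      then have "a \<in> S'" "b \<in> S'" using a b unfolding S'_def by blast+
      then show ?thesis using dec' False unfolding f_def by simp
    qed
  qed
  have dec: "\<forall>x\<in>S. \<forall>y\<in>S. M x y = (\<Sum>k\<in>S. complex_of_real (lam k) * e k x * cnj (e k y))"
  proof (intro ballI)
    fix x y assume x: "x \<in> S" and y: "y \<in> S"
    define Q where "Q = (\<lambda>c b. \<Sum>d\<in>S. M c d * H d b)"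
    have M'Q: "\<And>a b. M' a b = (\<Sum>c\<in>S. H a c * Q c b)"
      unfolding M'_def Q_def by (simp add: sum_distrib_left mult.assoc)
    have "(\<Sum>a\<in>S. \<Sum>b\<in>S. H x a * M' a b * H b y) = (\<Sum>b\<in>S. (\<Sum>a\<in>S. H x a * M' a b) * H b y)"
      by (subst sum.swap, simp add: sum_distrib_right)
    also have "\<dots> = (\<Sum>b\<in>S. Q x b * H b y)"
      unfolding M'Q using left_unit[OF fin Hunit x] by simp
    also have "\<dots> = M x y" unfolding Q_def by (rule right_unit[OF fin Hunit y])
    finally have Mrec: "M x y = (\<Sum>a\<in>S. \<Sum>b\<in>S. H x a * M' a b * H b y)" by simp
    have "(\<Sum>a\<in>S. \<Sum>b\<in>S. H x a * M' a b * H b y) =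
        (\<Sum>a\<in>S. \<Sum>b\<in>S. H x a * (if a = x0 \<and> b = x0 then c else 0) * H b y)
      + (\<Sum>a\<in>S. \<Sum>b\<in>S. H x a * (\<Sum>k\<in>S'. complex_of_real (lam' k) * f k a * cnj (f k b)) * H b y)"
    proof -
      have "(\<Sum>a\<in>S. \<Sum>b\<in>S. H x a * M' a b * H b y) = (\<Sum>a\<in>S. \<Sum>b\<in>S.
          H x a * (if a = x0 \<and> b = x0 then c else 0) * H b y +
          H x a * (\<Sum>k\<in>S'. complex_of_real (lam' k) * f k a * cnj (f k b)) * H b y)"
        by (intro sum.cong refl, simp only: M'dec distrib_left distrib_right)
      then show ?thesis by (simp only: sum.distrib)
    qed
    also have "(\<Sum>a\<in>S. \<Sum>b\<in>S. H x a * (if a = x0 \<and> b = x0 then c else 0) * H b y) = H x x0 * c * H x0 y"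
    proof -
      have "(\<Sum>a\<in>S. \<Sum>b\<in>S. H x a * (if a = x0 \<and> b = x0 then c else 0) * H b y)
          = (\<Sum>a\<in>S. if a = x0 then (\<Sum>b\<in>S. if b = x0 then H x a * c * H b y else 0) else 0)"
        by (rule sum.cong[OF refl], auto intro: sum.cong)
      also have "\<dots> = H x x0 * c * H x0 y" using fin x0 by (simp add: sum.delta')
      finally show ?thesis .
    qed
    also have "(\<Sum>a\<in>S. \<Sum>b\<in>S. H x a * (\<Sum>k\<in>S'. complex_of_real (lam' k) * f k a * cnj (f k b)) * H b y)
        = (\<Sum>k\<in>S'. complex_of_real (lam' k) * (\<Sum>a\<in>S. H x a * f k a) * (\<Sum>b\<in>S. cnj (f k b) * H b y))"
    proof -
      have "(\<Sum>a\<in>S. \<Sum>b\<in>S. H x a * (\<Sum>k\<in>S'. complex_of_real (lam' k) * f k a * cnj (f k b)) * H b y)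
          = (\<Sum>a\<in>S. \<Sum>b\<in>S. \<Sum>k\<in>S'. complex_of_real (lam' k) * (H x a * f k a) * (cnj (f k b) * H b y))"
        by (simp add: sum_distrib_left sum_distrib_right ac_simps)
      also have "\<dots> = (\<Sum>a\<in>S. \<Sum>k\<in>S'. \<Sum>b\<in>S. complex_of_real (lam' k) * (H x a * f k a) * (cnj (f k b) * H b y))"
        by (rule sum.cong[OF refl], rule sum.swap)
      also have "\<dots> = (\<Sum>k\<in>S'. \<Sum>a\<in>S. \<Sum>b\<in>S. complex_of_real (lam' k) * (H x a * f k a) * (cnj (f k b) * H b y))"
        by (rule sum.swap)
      also have "\<dots> = (\<Sum>k\<in>S'. complex_of_real (lam' k) * (\<Sum>a\<in>S. H x a * f k a) * (\<Sum>b\<in>S. cnj (f k b) * H b y))"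
      proof (rule sum.cong[OF refl])
        fix k
        have "complex_of_real (lam' k) * (\<Sum>a\<in>S. H x a * f k a) * (\<Sum>b\<in>S. cnj (f k b) * H b y)
            = complex_of_real (lam' k) * ((\<Sum>a\<in>S. H x a * f k a) * (\<Sum>b\<in>S. cnj (f k b) * H b y))"
          by (rule mult.assoc)
        also have "(\<Sum>a\<in>S. H x a * f k a) * (\<Sum>b\<in>S. cnj (f k b) * H b y)
            = (\<Sum>a\<in>S. \<Sum>b\<in>S. (H x a * f k a) * (cnj (f k b) * H b y))" by (rule sum_product)
        also have "complex_of_real (lam' k) * \<dots> = (\<Sum>a\<in>S. \<Sum>b\<in>S. complex_of_real (lam' k) * ((H x a * f k a) * (cnj (f k b) * H b y)))"
          by (simp add: sum_distrib_left)
        finally show "(\<Sum>a\<in>S. \<Sum>b\<in>S. complex_of_real (lam' k) * (H x a * f k a) * (cnj (f k b) * H b y)) =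
          complex_of_real (lam' k) * (\<Sum>a\<in>S. H x a * f k a) * (\<Sum>b\<in>S. cnj (f k b) * H b y)"
          by (simp add: mult.assoc)
      qed
      finally show ?thesis .
    qed
    also have "\<dots> = (\<Sum>k\<in>S'. complex_of_real (lam k) * e k x * cnj (e k y))"
    proof (rule sum.cong[OF refl])
      fix k assume k: "k \<in> S'"
      then have kx0: "k \<noteq> x0" using x0S' by blast
      have "(\<Sum>b\<in>S. cnj (f k b) * H b y) = cnj (\<Sum>b\<in>S. H y b * f k b)"
        unfolding cnj_sum by (intro sum.cong refl, simp, metis Hherm mult.commute)
      then show "complex_of_real (lam' k) * (\<Sum>a\<in>S. H x a * f k a) * (\<Sum>b\<in>S. cnj (f k b) * H b y) =
          complex_of_real (lam k) * e k x * cnj (e k y)"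
        unfolding e_def lam_def using kx0 by simp
    qed
    also have "H x x0 * c * H x0 y = complex_of_real (lam x0) * e x0 x * cnj (e x0 y)"
    proof -
      have "H x0 y = cnj (H y x0)" by (rule Hherm)
      also have "\<dots> = \<alpha> * cnj (u y)" using Hx0[OF y] by simp
      finally have "H x x0 * c * H x0 y = (cnj \<alpha> * \<alpha>) * c * u x * cnj (u y)" using Hx0[OF x] by (simp add: ac_simps)
      then show ?thesis using \<alpha>1 cR unfolding e_def lam_def by simp
    qed
    also have "complex_of_real (lam x0) * e x0 x * cnj (e x0 y) + (\<Sum>k\<in>S'. complex_of_real (lam k) * e k x * cnj (e k y))
        = (\<Sum>k\<in>S. complex_of_real (lam k) * e k x * cnj (e k y))" by (rule sumS'[symmetric])
    finally show "M x y = (\<Sum>k\<in>S. complex_of_real (lam k) * e k x * cnj (e k y))" using Mrec by simp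
  qed
  show ?case using orth dec by blast
qed

lemma restr_configs: "restr x A \<in> configs A"
  unfolding restr_def configs_def by simp

lemma configs_finite: "finite A \<Longrightarrow> finite (configs A)"
proof -
  assume fin: "finite A"
  have "configs A \<subseteq> (\<lambda>B i. i \<in> B) ` Pow A"
  proof
    fix x assume x: "x \<in> configs A"
    have "x = (\<lambda>i. i \<in> {j. x j})" by simp
    moreover have "{j. x j} \<in> Pow A" using x unfolding configs_def by auto
    ultimately show "x \<in> (\<lambda>B i. i \<in> B) ` Pow A" by blast
  qed
  then show ?thesis using fin by (simp add: finite_subset)
qed

lemma configs_split:
  assumes disj: "A \<inter> U = {}"
  shows "bij_betw (\<lambda>(y, z). (\<lambda>i. y i \<or> z i)) (configs A \<times> configs U) (configs (A \<union> U))"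
proof (rule bij_betw_byWitness[where f' = "\<lambda>x. (restr x A, restr x U)"])
  show "\<forall>a\<in>configs A \<times> configs U. (\<lambda>x. (restr x A, restr x U)) ((\<lambda>(y, z) i. y i \<or> z i) a) = a"
    using disj unfolding configs_def restr_def by (auto simp: fun_eq_iff)
  show "\<forall>a'\<in>configs (A \<union> U). (\<lambda>(y, z) i. y i \<or> z i) (restr a' A, restr a' U) = a'"
    unfolding configs_def restr_def by (auto simp: fun_eq_iff)
  show "(\<lambda>(y, z) i. y i \<or> z i) ` (configs A \<times> configs U) \<subseteq> configs (A \<union> U)"
    unfolding configs_def by auto
  show "(\<lambda>x. (restr x A, restr x U)) ` configs (A \<union> U) \<subseteq> configs A \<times> configs U"
    using restr_configs by auto
qed

lemma sum_prod_configs: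
  fixes g :: "nat set \<Rightarrow> cfg \<Rightarrow> 'b::comm_semiring_1"
  assumes "finite L" and "\<forall>A\<in>L. finite A" and "\<forall>A\<in>L. \<forall>B\<in>L. A \<noteq> B \<longrightarrow> A \<inter> B = {}"
  shows "(\<Sum>x\<in>configs (\<Union>L). \<Prod>A\<in>L. g A (restr x A)) = (\<Prod>A\<in>L. \<Sum>y\<in>configs A. g A y)"
  using assms
proof (induction L rule: finite_induct)
  case empty
  have "configs {} = {(\<lambda>i. False)}" unfolding configs_def by auto
  then show ?case by simp
next
  case (insert A L)
  define U where "U = \<Union>L"
  have disj: "A \<inter> U = {}"
  proof (rule ccontr)
    assume "A \<inter> U \<noteq> {}"
    then obtain i B where i: "i \<in> A" "B \<in> L" "i \<in> B" unfolding U_def by blast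
    then have "A \<noteq> B" using insert.hyps(2) by blast
    then have "A \<inter> B = {}" using insert.prems(2) i(2) by simp
    then show False using i by blast
  qed
  have finA: "finite A" and finU: "finite U" using insert.prems insert.hyps unfolding U_def by auto
  have IH: "(\<Sum>x\<in>configs U. \<Prod>B\<in>L. g B (restr x B)) = (\<Prod>B\<in>L. \<Sum>y\<in>configs B. g B y)"
    unfolding U_def using insert.IH insert.prems by blast
  have "(\<Sum>x\<in>configs (\<Union>(insert A L)). \<Prod>B\<in>insert A L. g B (restr x B))
      = (\<Sum>x\<in>configs (A \<union> U). g A (restr x A) * (\<Prod>B\<in>L. g B (restr x B)))"
    unfolding U_def using insert.hyps by simp
  also have "\<dots> = (\<Sum>p\<in>configs A \<times> configs U. g A (restr ((\<lambda>(y, z). (\<lambda>i. y i \<or> z i)) p) A)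
        * (\<Prod>B\<in>L. g B (restr ((\<lambda>(y, z). (\<lambda>i. y i \<or> z i)) p) B)))"
    by (rule sum.reindex_bij_betw[OF configs_split[OF disj], symmetric])
  also have "\<dots> = (\<Sum>p\<in>configs A \<times> configs U. g A (fst p) * (\<Prod>B\<in>L. g B (restr (snd p) B)))"
  proof (rule sum.cong[OF refl])
    fix p assume p: "p \<in> configs A \<times> configs U"
    obtain y z where pyz: "p = (y, z)" by (cases p, auto)
    have y: "y \<in> configs A" and z: "z \<in> configs U" using p pyz by auto
    have r1: "restr (\<lambda>i. y i \<or> z i) A = y"
      using y z disj unfolding configs_def restr_def by (auto simp: fun_eq_iff)
    have r2: "restr (\<lambda>i. y i \<or> z i) B = restr z B" if "B \<in> L" for B
    proof -
      have "B \<noteq> A" using insert.hyps(2) that by blast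
      then have "B \<inter> A = {}" using insert.prems(2) that by simp
      then show ?thesis using y unfolding configs_def restr_def by (auto simp: fun_eq_iff)
    qed
    show "g A (restr ((\<lambda>(y, z). (\<lambda>i. y i \<or> z i)) p) A) * (\<Prod>B\<in>L. g B (restr ((\<lambda>(y, z). (\<lambda>i. y i \<or> z i)) p) B))
        = g A (fst p) * (\<Prod>B\<in>L. g B (restr (snd p) B))"
      using r1 r2 pyz by simp
  qed
  also have "\<dots> = (\<Sum>y\<in>configs A. g A y) * (\<Sum>z\<in>configs U. \<Prod>B\<in>L. g B (restr z B))"
    by (simp add: sum_product sum.cartesian_product split_beta)
  also have "\<dots> = (\<Prod>B\<in>insert A L. \<Sum>y\<in>configs B. g B y)"
    using IH insert.hyps by simp
  finally show ?case .
qed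

definition Pi_op :: "real^3 \<Rightarrow> nat \<Rightarrow> (cfg \<Rightarrow> complex) \<Rightarrow> cfg \<Rightarrow> complex" where
  "Pi_op n i \<phi> x = (1/2) * (pauli_n n (x i) False * \<phi> (x(i:=False)) + pauli_n n (x i) True * \<phi> (x(i:=True)))"

lemma pauli_alg:
  fixes n1 n2 n3 :: real and a b :: complex
  assumes "n1^2 + n2^2 + n3^2 = 1"
  shows "(cmod (complex_of_real n3 * a + Complex n1 (- n2) * b))^2 + (cmod (Complex n1 n2 * a + complex_of_real (- n3) * b))^2
    = (cmod a)^2 + (cmod b)^2"
proof -
  have "(cmod (complex_of_real n3 * a + Complex n1 (- n2) * b))^2 + (cmod (Complex n1 n2 * a + complex_of_real (- n3) * b))^2
    = (n1^2 + n2^2 + n3^2) * ((cmod a)^2 + (cmod b)^2)"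
    by (simp only: cmod_power2, cases a, cases b, simp add: power2_eq_square algebra_simps)
  then show ?thesis using assms by simp
qed

lemma norm3: "norm (n :: real^3) = 1 \<Longrightarrow> (n$1)^2 + (n$2)^2 + (n$3)^2 = 1"
proof -
  assume "norm n = 1"
  then have "(norm n)^2 = 1" by simp
  then show ?thesis unfolding norm_vec_def L2_set_def
    by (simp add: sum_3 real_norm_def)
qed
lemma configs_split_i:
  assumes fin: "finite T" and i: "i \<in> T"
  shows "(\<Sum>x\<in>configs T. F x) = (\<Sum>x\<in>{x\<in>configs T. \<not> x i}. F x + F (x(i:=True)))"
proof -
  define C0 where "C0 = {x\<in>configs T. \<not> x i}"
  define C1 where "C1 = {x\<in>configs T. x i}"
  have fC: "finite (configs T)" using configs_finite[OF fin] .
  have un: "configs T = C0 \<union> C1" and dj: "C0 \<inter> C1 = {}" unfolding C0_def C1_def by auto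
  have f0: "finite C0" and f1: "finite C1" using fC unfolding C0_def C1_def by auto
  have bij: "bij_betw (\<lambda>x. x(i:=True)) C0 C1"
  proof (rule bij_betw_byWitness[where f' = "\<lambda>x. x(i:=False)"])
    show "\<forall>a\<in>C0. a(i := True, i := False) = a" unfolding C0_def by (auto simp: fun_eq_iff)
    show "\<forall>a'\<in>C1. a'(i := False, i := True) = a'" unfolding C1_def by (auto simp: fun_eq_iff)
    show "(\<lambda>x. x(i := True)) ` C0 \<subseteq> C1" using i unfolding C0_def C1_def configs_def by (auto split: if_splits)
    show "(\<lambda>x. x(i := False)) ` C1 \<subseteq> C0" using i unfolding C0_def C1_def configs_def by (auto split: if_splits)
  qed
  have "(\<Sum>x\<in>configs T. F x) = (\<Sum>x\<in>C0. F x) + (\<Sum>x\<in>C1. F x)"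
    unfolding un using f0 f1 dj by (rule sum.union_disjoint)
  also have "(\<Sum>x\<in>C1. F x) = (\<Sum>x\<in>C0. F (x(i:=True)))"
    by (rule sum.reindex_bij_betw[OF bij, symmetric])
  finally show ?thesis unfolding C0_def by (simp add: sum.distrib)
qed

lemma Pi_norm:
  fixes n :: "real^3"
  assumes fin: "finite T" and i: "i \<in> T" and nn: "(n$1)^2 + (n$2)^2 + (n$3)^2 = 1"
  shows "(\<Sum>x\<in>configs T. (cmod (Pi_op n i \<phi> x))^2) = (1/4) * (\<Sum>x\<in>configs T. (cmod (\<phi> x))^2)"
proof -
  have "(\<Sum>x\<in>configs T. (cmod (Pi_op n i \<phi> x))^2)
     = (\<Sum>x\<in>{x\<in>configs T. \<not> x i}. (cmod (Pi_op n i \<phi> x))^2 + (cmod (Pi_op n i \<phi> (x(i:=True))))^2)"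
    by (rule configs_split_i[OF fin i])
  also have "\<dots> = (\<Sum>x\<in>{x\<in>configs T. \<not> x i}. (1/4) * ((cmod (\<phi> x))^2 + (cmod (\<phi> (x(i:=True))))^2))"
  proof (rule sum.cong[OF refl])
    fix x assume x: "x \<in> {x\<in>configs T. \<not> x i}"
    then have xi: "\<not> x i" by simp
    have e1: "x(i:=False) = x" using xi by (auto simp: fun_eq_iff)
    have e2: "x(i:=True, i:=False) = x" using xi by (auto simp: fun_eq_iff)
    have p1: "Pi_op n i \<phi> x = (1/2) * (complex_of_real (n$3) * \<phi> x + Complex (n$1) (- n$2) * \<phi> (x(i:=True)))"
      unfolding Pi_op_def pauli_n_def using xi e1 by simp
    have p2: "Pi_op n i \<phi> (x(i:=True)) = (1/2) * (Complex (n$1) (n$2) * \<phi> x + complex_of_real (- n$3) * \<phi> (x(i:=True)))"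
      unfolding Pi_op_def pauli_n_def using e2 by simp
    have "(cmod (Pi_op n i \<phi> x))^2 + (cmod (Pi_op n i \<phi> (x(i:=True))))^2
      = (1/4) * ((cmod (complex_of_real (n$3) * \<phi> x + Complex (n$1) (- n$2) * \<phi> (x(i:=True))))^2
          + (cmod (Complex (n$1) (n$2) * \<phi> x + complex_of_real (- n$3) * \<phi> (x(i:=True))))^2)"
      unfolding p1 p2 by (simp add: norm_mult norm_divide power_divide power_mult_distrib)
    also have "\<dots> = (1/4) * ((cmod (\<phi> x))^2 + (cmod (\<phi> (x(i:=True))))^2)"
      using pauli_alg[OF nn] by simp
    finally show "(cmod (Pi_op n i \<phi> x))^2 + (cmod (Pi_op n i \<phi> (x(i:=True))))^2
      = (1/4) * ((cmod (\<phi> x))^2 + (cmod (\<phi> (x(i:=True))))^2)" .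
  qed
  also have "\<dots> = (1/4) * (\<Sum>x\<in>configs T. (cmod (\<phi> x))^2)"
    by (simp only: sum_distrib_left[symmetric] configs_split_i[OF fin i])
  finally show ?thesis .
qed

lemma J_app:
  assumes x: "x \<in> configs {1..N}"
  shows "(\<Sum>y\<in>configs {1..N}. J_op N n x y * \<phi> y) = (\<Sum>i\<in>{1..N}. Pi_op n i \<phi> x)"
proof -
  have fS: "finite (configs {1..N})" by (rule configs_finite, simp)
  have "(\<Sum>y\<in>configs {1..N}. J_op N n x y * \<phi> y)
      = (\<Sum>y\<in>configs {1..N}. \<Sum>i\<in>{1..N}. (1/2) * ((if \<forall>j. j \<noteq> i \<longrightarrow> x j = y j then pauli_n n (x i) (y i) * \<phi> y else 0)))"
  proof -
    have eq: "(if \<forall>j. j \<noteq> i \<longrightarrow> x j = y j then pauli_n n (x i) (y i) else 0) * \<phi> y / 2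
       = (if \<forall>j. j \<noteq> i \<longrightarrow> x j = y j then pauli_n n (x i) (y i) * \<phi> y else 0) / 2" for y i
      by (cases "\<forall>j. j \<noteq> i \<longrightarrow> x j = y j", auto)
    show ?thesis unfolding J_op_def
      by (rule sum.cong[OF refl], simp add: sum_distrib_left sum_distrib_right eq)
  qed
  also have "\<dots> = (\<Sum>i\<in>{1..N}. (1/2) * (\<Sum>y\<in>configs {1..N}. (if \<forall>j. j \<noteq> i \<longrightarrow> x j = y j then pauli_n n (x i) (y i) * \<phi> y else 0)))"
    by (subst sum.swap, simp add: sum_distrib_left)
  also have "\<dots> = (\<Sum>i\<in>{1..N}. Pi_op n i \<phi> x)"
  proof (rule sum.cong[OF refl])
    fix i assume i: "i \<in> {1..N}"
    have set: "{y \<in> configs {1..N}. \<forall>j. j \<noteq> i \<longrightarrow> x j = y j} = {x(i:=False), x(i:=True)}"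
    proof
      show "{y \<in> configs {1..N}. \<forall>j. j \<noteq> i \<longrightarrow> x j = y j} \<subseteq> {x(i:=False), x(i:=True)}"
      proof
        fix y assume "y \<in> {y \<in> configs {1..N}. \<forall>j. j \<noteq> i \<longrightarrow> x j = y j}"
        then have "y = x(i := y i)" by (auto simp: fun_eq_iff)
        then show "y \<in> {x(i:=False), x(i:=True)}" by (cases "y i", auto)
      qed
      show "{x(i:=False), x(i:=True)} \<subseteq> {y \<in> configs {1..N}. \<forall>j. j \<noteq> i \<longrightarrow> x j = y j}"
        using x i unfolding configs_def by auto
    qed
    have "(\<Sum>y\<in>configs {1..N}. (if \<forall>j. j \<noteq> i \<longrightarrow> x j = y j then pauli_n n (x i) (y i) * \<phi> y else 0))
        = (\<Sum>y\<in>{x(i:=False), x(i:=True)}. pauli_n n (x i) (y i) * \<phi> y)"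
      unfolding set[symmetric] using fS by (simp add: sum.inter_filter)
    also have "\<dots> = pauli_n n (x i) False * \<phi> (x(i:=False)) + pauli_n n (x i) True * \<phi> (x(i:=True))"
    proof -
      have "x(i:=False) \<noteq> x(i:=True)" by (simp add: fun_eq_iff)
      then show ?thesis by simp
    qed
    finally show "(1/2) * (\<Sum>y\<in>configs {1..N}. (if \<forall>j. j \<noteq> i \<longrightarrow> x j = y j then pauli_n n (x i) (y i) * \<phi> y else 0))
        = Pi_op n i \<phi> x" unfolding Pi_op_def by simp
  qed
  finally show ?thesis .
qed

lemma pauli_herm: "pauli_n n b a = cnj (pauli_n n a b)"
  unfolding pauli_n_def by (cases a; cases b; simp add: complex_eq_iff)

lemma J_herm: "J_op N n y x = cnj (J_op N n x y)"
proof -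
  have "cnj (J_op N n x y) = (1/2) * (\<Sum>i\<in>{1..N}. cnj (if \<forall>j. j \<noteq> i \<longrightarrow> x j = y j then pauli_n n (x i) (y i) else 0))"
    unfolding J_op_def by simp
  also have "\<dots> = J_op N n y x" unfolding J_op_def
  proof (rule arg_cong[where f = "\<lambda>t. (1/2) * t"], rule sum.cong[OF refl])
    fix i
    have ag: "(\<forall>j. j \<noteq> i \<longrightarrow> x j = y j) = (\<forall>j. j \<noteq> i \<longrightarrow> y j = x j)" by auto
    show "cnj (if \<forall>j. j \<noteq> i \<longrightarrow> x j = y j then pauli_n n (x i) (y i) else 0) =
        (if \<forall>j. j \<noteq> i \<longrightarrow> y j = x j then pauli_n n (y i) (x i) else 0)"
      unfolding ag pauli_herm[of n "y i" "x i"] by (cases "\<forall>j. j \<noteq> i \<longrightarrow> y j = x j", auto)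
  qed
  finally show ?thesis by simp
qed

definition prodvec :: "nat set set \<Rightarrow> (nat set \<Rightarrow> cfg \<Rightarrow> complex) \<Rightarrow> cfg \<Rightarrow> complex" where
  "prodvec L v = (\<lambda>x. \<Prod>A\<in>L. v A (restr x A))"

lemma Pi_prodvec:
  assumes fin: "finite L" and A: "A \<in> L" and i: "i \<in> A"
    and disj: "\<forall>A\<in>L. \<forall>B\<in>L. A \<noteq> B \<longrightarrow> A \<inter> B = {}"
  shows "Pi_op n i (prodvec L v) x = prodvec L (v(A := Pi_op n i (v A))) x"
proof -
  have other: "restr (x(i:=b)) B = restr x B" if "B \<in> L - {A}" for B b
  proof -
    have "B \<noteq> A" "B \<in> L" using that by auto
    then have "B \<inter> A = {}" using disj A by blast
    then have "i \<notin> B" using i by blast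
    then show ?thesis unfolding restr_def by (auto simp: fun_eq_iff)
  qed
  have selfA: "restr (x(i:=b)) A = (restr x A)(i:=b)" for b
    using i unfolding restr_def by (auto simp: fun_eq_iff)
  have xi: "restr x A i = x i" using i unfolding restr_def by simp
  have pv: "prodvec L v (x(i:=b)) = v A ((restr x A)(i:=b)) * (\<Prod>B\<in>L - {A}. v B (restr x B))" for b
  proof -
    have "prodvec L v (x(i:=b)) = (\<Prod>B\<in>L. v B (restr (x(i:=b)) B))" unfolding prodvec_def by (rule refl)
    also have "\<dots> = v A (restr (x(i:=b)) A) * (\<Prod>B\<in>L - {A}. v B (restr (x(i:=b)) B))"
      by (rule prod.remove[OF fin A])
    also have "(\<Prod>B\<in>L - {A}. v B (restr (x(i:=b)) B)) = (\<Prod>B\<in>L - {A}. v B (restr x B))"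
      by (rule prod.cong[OF refl], simp only: other)
    also have "restr (x(i:=b)) A = (restr x A)(i:=b)" by (rule selfA)
    finally show ?thesis .
  qed
  have "prodvec L (v(A := Pi_op n i (v A))) x = Pi_op n i (v A) (restr x A) * (\<Prod>B\<in>L - {A}. v B (restr x B))"
  proof -
    have "prodvec L (v(A := Pi_op n i (v A))) x = (\<Prod>B\<in>L. (v(A := Pi_op n i (v A))) B (restr x B))"
      unfolding prodvec_def by (rule refl)
    also have "\<dots> = (v(A := Pi_op n i (v A))) A (restr x A) * (\<Prod>B\<in>L - {A}. (v(A := Pi_op n i (v A))) B (restr x B))"
      by (rule prod.remove[OF fin A])
    also have "(v(A := Pi_op n i (v A))) A (restr x A) = Pi_op n i (v A) (restr x A)" by simp
    also have "(\<Prod>B\<in>L - {A}. (v(A := Pi_op n i (v A))) B (restr x B)) = (\<Prod>B\<in>L - {A}. v B (restr x B))"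
      by (rule prod.cong, auto)
    finally show ?thesis .
  qed
  then show ?thesis unfolding Pi_op_def[of n i "prodvec L v"] pv
    unfolding Pi_op_def xi by (simp add: algebra_simps)
qed

definition ipS :: "cfg set \<Rightarrow> (cfg \<Rightarrow> complex) \<Rightarrow> (cfg \<Rightarrow> complex) \<Rightarrow> complex" where
  "ipS S u v = (\<Sum>x\<in>S. cnj (u x) * v x)"
definition appS :: "cfg set \<Rightarrow> qop \<Rightarrow> (cfg \<Rightarrow> complex) \<Rightarrow> cfg \<Rightarrow> complex" where
  "appS S K v = (\<lambda>x. \<Sum>y\<in>S. K x y * v y)"
definition hermS :: "cfg set \<Rightarrow> qop \<Rightarrow> bool" where
  "hermS S K \<longleftrightarrow> (\<forall>x\<in>S. \<forall>y\<in>S. K x y = cnj (K y x))"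
definition Gk :: "cfg set \<Rightarrow> qop \<Rightarrow> qop \<Rightarrow> cfg \<Rightarrow> cfg \<Rightarrow> complex" where
  "Gk S A X y z = (\<Sum>x\<in>S. 4 * \<i> * cnj (X x y) * A x z - cnj (X x y) * X x z)"
definition Phi :: "cfg set \<Rightarrow> qop \<Rightarrow> qop \<Rightarrow> qop \<Rightarrow> real" where
  "Phi S A X \<sigma> = Re (\<Sum>y\<in>S. \<Sum>z\<in>S. \<sigma> z y * Gk S A X y z)"
definition Good :: "cfg set \<Rightarrow> qop \<Rightarrow> real \<Rightarrow> qop \<Rightarrow> bool" where
  "Good S A B \<sigma> \<longleftrightarrow> hermS S \<sigma> \<and> (\<forall>X. hermS S X \<longrightarrow> Phi S A X \<sigma> \<le> B)"

lemma bilin_pure: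
  "(\<Sum>y\<in>S. \<Sum>z\<in>S. \<psi> z * cnj (\<psi> y) * (\<Sum>x\<in>S. cnj (K x y) * L x z)) = ipS S (appS S K \<psi>) (appS S L \<psi>)"
proof -
  have "ipS S (appS S K \<psi>) (appS S L \<psi>) = (\<Sum>x\<in>S. (\<Sum>y\<in>S. cnj (K x y) * cnj (\<psi> y)) * (\<Sum>z\<in>S. L x z * \<psi> z))"
    unfolding ipS_def appS_def by simp
  also have "\<dots> = (\<Sum>x\<in>S. \<Sum>y\<in>S. \<Sum>z\<in>S. (cnj (K x y) * cnj (\<psi> y)) * (L x z * \<psi> z))"
    by (simp only: sum_product)
  also have "\<dots> = (\<Sum>x\<in>S. \<Sum>y\<in>S. \<Sum>z\<in>S. \<psi> z * cnj (\<psi> y) * (cnj (K x y) * L x z))"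
    by (simp add: ac_simps)
  also have "\<dots> = (\<Sum>y\<in>S. \<Sum>x\<in>S. \<Sum>z\<in>S. \<psi> z * cnj (\<psi> y) * (cnj (K x y) * L x z))"
    by (rule sum.swap)
  also have "\<dots> = (\<Sum>y\<in>S. \<Sum>z\<in>S. \<Sum>x\<in>S. \<psi> z * cnj (\<psi> y) * (cnj (K x y) * L x z))"
    by (rule sum.cong[OF refl], rule sum.swap)
  also have "\<dots> = (\<Sum>y\<in>S. \<Sum>z\<in>S. \<psi> z * cnj (\<psi> y) * (\<Sum>x\<in>S. cnj (K x y) * L x z))"
    by (simp add: sum_distrib_left)
  finally show ?thesis by simp
qed

lemma Phi_pure:
  "Phi S A X (\<lambda>x y. \<psi> x * cnj (\<psi> y)) =
   Re (4 * \<i> * ipS S (appS S X \<psi>) (appS S A \<psi>) - ipS S (appS S X \<psi>) (appS S X \<psi>))"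
proof -
  have G: "Gk S A X y z = 4 * \<i> * (\<Sum>x\<in>S. cnj (X x y) * A x z) - (\<Sum>x\<in>S. cnj (X x y) * X x z)" for y z
    unfolding Gk_def by (simp add: sum_subtractf sum_distrib_left mult.assoc)
  have "(\<Sum>y\<in>S. \<Sum>z\<in>S. \<psi> z * cnj (\<psi> y) * Gk S A X y z)
     = 4 * \<i> * (\<Sum>y\<in>S. \<Sum>z\<in>S. \<psi> z * cnj (\<psi> y) * (\<Sum>x\<in>S. cnj (X x y) * A x z))
       - (\<Sum>y\<in>S. \<Sum>z\<in>S. \<psi> z * cnj (\<psi> y) * (\<Sum>x\<in>S. cnj (X x y) * X x z))"
    unfolding G by (simp add: sum_subtractf sum_distrib_left right_diff_distrib ac_simps)
  then show ?thesis unfolding Phi_def bilin_pure by simp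
qed

lemma Phi_lin:
  assumes "finite I" and "\<forall>x\<in>S. \<forall>y\<in>S. \<sigma> x y = (\<Sum>i\<in>I. complex_of_real (p i) * \<tau> i x y)"
  shows "Phi S A X \<sigma> = (\<Sum>i\<in>I. p i * Phi S A X (\<tau> i))"
proof -
  have "(\<Sum>y\<in>S. \<Sum>z\<in>S. \<sigma> z y * Gk S A X y z) = (\<Sum>y\<in>S. \<Sum>z\<in>S. \<Sum>i\<in>I. complex_of_real (p i) * (\<tau> i z y * Gk S A X y z))"
    using assms(2) by (simp add: sum_distrib_right mult.assoc)
  also have "\<dots> = (\<Sum>i\<in>I. complex_of_real (p i) * (\<Sum>y\<in>S. \<Sum>z\<in>S. \<tau> i z y * Gk S A X y z))"
    by (simp add: sum_distrib_left, subst sum.swap, rule sum.cong[OF refl], subst sum.swap, rule refl)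
  finally show ?thesis unfolding Phi_def by (simp add: Re_sum)
qed

lemma Good_convex:
  assumes fin: "finite I" and p: "\<forall>i\<in>I. p i \<ge> 0" and p1: "(\<Sum>i\<in>I. p i) = 1"
    and good: "\<forall>i\<in>I. Good S A B (\<tau> i)"
    and dec: "\<forall>x\<in>S. \<forall>y\<in>S. \<sigma> x y = (\<Sum>i\<in>I. complex_of_real (p i) * \<tau> i x y)"
  shows "Good S A B \<sigma>"
  unfolding Good_def
proof (intro conjI allI impI)
  show "hermS S \<sigma>" unfolding hermS_def
  proof (intro ballI)
    fix x y assume x: "x \<in> S" and y: "y \<in> S"
    have "\<sigma> x y = (\<Sum>i\<in>I. complex_of_real (p i) * \<tau> i x y)" using dec x y by blast
    also have "\<dots> = (\<Sum>i\<in>I. complex_of_real (p i) * cnj (\<tau> i y x))"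
    proof (rule sum.cong[OF refl])
      fix i assume "i \<in> I"
      then have "hermS S (\<tau> i)" using good unfolding Good_def by blast
      then have "\<tau> i x y = cnj (\<tau> i y x)" using x y unfolding hermS_def by blast
      then show "complex_of_real (p i) * \<tau> i x y = complex_of_real (p i) * cnj (\<tau> i y x)" by simp
    qed
    also have "\<dots> = cnj (\<sigma> y x)" using dec x y by simp
    finally show "\<sigma> x y = cnj (\<sigma> y x)" .
  qed
  fix X assume X: "hermS S X"
  have "Phi S A X \<sigma> = (\<Sum>i\<in>I. p i * Phi S A X (\<tau> i))" by (rule Phi_lin[OF fin dec])
  also have "\<dots> \<le> (\<Sum>i\<in>I. p i * B)"
    using good X p unfolding Good_def by (intro sum_mono mult_left_mono, auto)
  also have "\<dots> = B" using p1 by (simp add: sum_distrib_right[symmetric])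
  finally show "Phi S A X \<sigma> \<le> B" .
qed
lemma ipS_swap: "ipS S u v = cnj (ipS S v u)"
  unfolding ipS_def by (simp add: mult.commute)

lemma ipS_self: "ipS S u u = complex_of_real (\<Sum>x\<in>S. (cmod (u x))^2)"
  unfolding ipS_def by (simp add: cnj_mult_self)

lemma herm_quad_real:
  assumes X: "hermS S X"
  shows "Im (ipS S (appS S X \<psi>) \<psi>) = 0"
proof -
  define Q where "Q = ipS S (appS S X \<psi>) \<psi>"
  have Q1: "Q = (\<Sum>x\<in>S. \<Sum>y\<in>S. cnj (X x y) * cnj (\<psi> y) * \<psi> x)"
    unfolding Q_def ipS_def appS_def by (simp add: sum_distrib_right)
  have "cnj Q = (\<Sum>x\<in>S. \<Sum>y\<in>S. X x y * \<psi> y * cnj (\<psi> x))" unfolding Q1 by simp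
  also have "\<dots> = (\<Sum>x\<in>S. \<Sum>y\<in>S. cnj (X y x) * \<psi> y * cnj (\<psi> x))"
  proof (rule sum.cong[OF refl], rule sum.cong[OF refl])
    fix x y assume "x \<in> S" "y \<in> S"
    then have "X x y = cnj (X y x)" using X unfolding hermS_def by blast
    then show "X x y * \<psi> y * cnj (\<psi> x) = cnj (X y x) * \<psi> y * cnj (\<psi> x)" by simp
  qed
  also have "\<dots> = (\<Sum>y\<in>S. \<Sum>x\<in>S. cnj (X y x) * \<psi> y * cnj (\<psi> x))" by (rule sum.swap)
  also have "\<dots> = Q" unfolding Q1 by (simp add: ac_simps)
  finally have "cnj Q = Q" .
  then show ?thesis unfolding Q_def using complex_cnj_cancel_iff
    by (metis Reals_cnj_iff complex_is_Real_iff)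
qed

lemma herm_quad_real2:
  assumes X: "hermS S X"
  shows "Im (ipS S \<psi> (appS S X \<psi>)) = 0"
  using herm_quad_real[OF X, of \<psi>] by (simp add: ipS_swap[of S \<psi>])

lemma pointwise_bd: "Re (4 * \<i> * (cnj a * b)) \<le> (cmod a)^2 + 4 * (cmod b)^2"
proof -
  have "0 \<le> (Re a + 2 * Im b)^2 + (Im a - 2 * Re b)^2" by simp
  then show ?thesis by (simp only: cmod_power2, simp add: power2_eq_square algebra_simps)
qed

lemma pure_bound:
  fixes c :: real
  assumes X: "hermS S X"
  shows "Re (4 * \<i> * ipS S (appS S X \<psi>) (appS S A \<psi>) - ipS S (appS S X \<psi>) (appS S X \<psi>))
     \<le> 4 * (\<Sum>x\<in>S. (cmod (appS S A \<psi> x - complex_of_real c * \<psi> x))^2)"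
proof -
  define u where "u = appS S X \<psi>"
  define v where "v = (\<lambda>x. appS S A \<psi> x - complex_of_real c * \<psi> x)"
  have split: "ipS S u (appS S A \<psi>) = ipS S u v + complex_of_real c * ipS S u \<psi>"
    unfolding ipS_def v_def by (simp add: sum_distrib_left algebra_simps sum.distrib[symmetric])
  have im0: "Im (ipS S u \<psi>) = 0" unfolding u_def by (rule herm_quad_real[OF X])
  have "Re (4 * \<i> * ipS S u (appS S A \<psi>)) = Re (4 * \<i> * ipS S u v)"
    unfolding split using im0 by (simp add: algebra_simps)
  also have "\<dots> = (\<Sum>x\<in>S. Re (4 * \<i> * (cnj (u x) * v x)))"
    unfolding ipS_def by (simp add: sum_distrib_left Re_sum)
  also have "\<dots> \<le> (\<Sum>x\<in>S. (cmod (u x))^2 + 4 * (cmod (v x))^2)"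
    by (rule sum_mono, rule pointwise_bd)
  finally have "Re (4 * \<i> * ipS S u (appS S A \<psi>)) \<le> (\<Sum>x\<in>S. (cmod (u x))^2) + 4 * (\<Sum>x\<in>S. (cmod (v x))^2)"
    by (simp add: sum.distrib sum_distrib_left)
  then show ?thesis unfolding u_def[symmetric] ipS_self v_def by simp
qed

lemma ip_prodvec:
  assumes fin: "finite L" and finA: "\<forall>A\<in>L. finite A" and disj: "\<forall>A\<in>L. \<forall>B\<in>L. A \<noteq> B \<longrightarrow> A \<inter> B = {}"
  shows "ipS (configs (\<Union>L)) (prodvec L f) (prodvec L g) = (\<Prod>A\<in>L. ipS (configs A) (f A) (g A))"
proof -
  have "ipS (configs (\<Union>L)) (prodvec L f) (prodvec L g)
      = (\<Sum>x\<in>configs (\<Union>L). \<Prod>A\<in>L. cnj (f A (restr x A)) * g A (restr x A))"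
    unfolding ipS_def prodvec_def by (simp add: prod.distrib)
  also have "\<dots> = (\<Prod>A\<in>L. \<Sum>y\<in>configs A. cnj (f A y) * g A y)"
    by (rule sum_prod_configs[OF fin finA disj])
  finally show ?thesis unfolding ipS_def .
qed

lemma prod_reduce1:
  assumes "finite L" "A \<in> L" "\<forall>C\<in>L - {A}. F C = (1::complex)"
  shows "(\<Prod>C\<in>L. F C) = F A"
proof -
  have "(\<Prod>C\<in>L. F C) = F A * (\<Prod>C\<in>L - {A}. F C)" by (rule prod.remove[OF assms(1,2)])
  also have "(\<Prod>C\<in>L - {A}. F C) = 1" using assms(3) by simp
  finally show ?thesis by simp
qed

lemma prod_reduce2:
  assumes "finite L" "A \<in> L" "B \<in> L" "A \<noteq> B" "\<forall>C\<in>L - {A, B}. F C = (1::complex)"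
  shows "(\<Prod>C\<in>L. F C) = F A * F B"
proof -
  have "(\<Prod>C\<in>L. F C) = F A * (\<Prod>C\<in>L - {A}. F C)" by (rule prod.remove[OF assms(1,2)])
  also have "(\<Prod>C\<in>L - {A}. F C) = F B * (\<Prod>C\<in>L - {A} - {B}. F C)"
    using assms by (intro prod.remove, auto)
  also have "(\<Prod>C\<in>L - {A} - {B}. F C) = 1" using assms(5) by (intro prod.neutral, auto)
  finally show ?thesis by simp
qed

lemma ip_expand:
  "ipS S (\<lambda>x. p x - \<alpha> * q x) (\<lambda>x. r x - \<beta> * s x)
   = ipS S p r - \<beta> * ipS S p s - cnj \<alpha> * ipS S q r + cnj \<alpha> * \<beta> * ipS S q s"
  unfolding ipS_def by (simp add: algebra_simps sum.distrib sum_subtractf sum_distrib_left)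

lemma re_ip_le: "Re (ipS S u w) \<le> (Re (ipS S u u) + Re (ipS S w w)) / 2"
proof -
  have pt: "Re (cnj a * b) \<le> ((cmod a)^2 + (cmod b)^2) / 2" for a b :: complex
  proof -
    have "0 \<le> (Re a - Re b)^2 + (Im a - Im b)^2" by simp
    then show ?thesis by (simp only: cmod_power2, simp add: power2_eq_square algebra_simps)
  qed
  have "Re (ipS S u w) = (\<Sum>x\<in>S. Re (cnj (u x) * w x))" unfolding ipS_def by (simp add: Re_sum)
  also have "\<dots> \<le> (\<Sum>x\<in>S. ((cmod (u x))^2 + (cmod (w x))^2) / 2)" by (rule sum_mono, rule pt)
  also have "\<dots> = (Re (ipS S u u) + Re (ipS S w w)) / 2"
    unfolding ipS_self by (simp only: sum_divide_distrib[symmetric] sum.distrib Re_complex_of_real)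
  finally show ?thesis .
qed

lemma ip_sums:
  "ipS S (\<lambda>x. \<Sum>i\<in>I. u i x) (\<lambda>x. \<Sum>j\<in>I. u j x) = (\<Sum>i\<in>I. \<Sum>j\<in>I. ipS S (u i) (u j))"
proof -
  have "ipS S (\<lambda>x. \<Sum>i\<in>I. u i x) (\<lambda>x. \<Sum>j\<in>I. u j x) = (\<Sum>x\<in>S. \<Sum>i\<in>I. \<Sum>j\<in>I. cnj (u i x) * u j x)"
    unfolding ipS_def by (simp add: sum_product)
  also have "\<dots> = (\<Sum>i\<in>I. \<Sum>x\<in>S. \<Sum>j\<in>I. cnj (u i x) * u j x)" by (rule sum.swap)
  also have "\<dots> = (\<Sum>i\<in>I. \<Sum>j\<in>I. \<Sum>x\<in>S. cnj (u i x) * u j x)"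
    by (rule sum.cong[OF refl], rule sum.swap)
  finally show ?thesis unfolding ipS_def .
qed
lemma count_pairs:
  assumes finL: "finite L" and finA: "\<forall>A\<in>L. finite A"
    and disj: "\<forall>A\<in>L. \<forall>B\<in>L. A \<noteq> B \<longrightarrow> A \<inter> B = {}"
  shows "(\<Sum>i\<in>\<Union>L. \<Sum>j\<in>\<Union>L. (if \<exists>A\<in>L. i \<in> A \<and> j \<in> A then (1/4::real) else 0))
     = (\<Sum>A\<in>L. real (card A ^ 2)) / 4"
proof -
  have fU: "finite (\<Union>L)" using finL finA by blast
  have inner: "(\<Sum>j\<in>\<Union>L. (if \<exists>B\<in>L. i \<in> B \<and> j \<in> B then (1/4::real) else 0)) = real (card A) / 4"
    if A: "A \<in> L" and i: "i \<in> A" for A i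
  proof -
    have "{j \<in> \<Union>L. \<exists>B\<in>L. i \<in> B \<and> j \<in> B} = A"
    proof
      show "{j \<in> \<Union>L. \<exists>B\<in>L. i \<in> B \<and> j \<in> B} \<subseteq> A"
      proof
        fix j assume "j \<in> {j \<in> \<Union>L. \<exists>B\<in>L. i \<in> B \<and> j \<in> B}"
        then obtain B where B: "B \<in> L" "i \<in> B" "j \<in> B" by blast
        have "B = A"
        proof (rule ccontr)
          assume "B \<noteq> A"
          then have "B \<inter> A = {}" using disj A B(1) by blast
          then show False using i B(2) by blast
        qed
        then show "j \<in> A" using B(3) by simp
      qed
      show "A \<subseteq> {j \<in> \<Union>L. \<exists>B\<in>L. i \<in> B \<and> j \<in> B}" using A i by blast
    qed
    then have "(\<Sum>j\<in>\<Union>L. (if \<exists>B\<in>L. i \<in> B \<and> j \<in> B then (1/4::real) else 0)) = (\<Sum>j\<in>A. 1/4)"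
      using sum.inter_filter[OF fU, of "\<lambda>_. 1/4::real" "\<lambda>j. \<exists>B\<in>L. i \<in> B \<and> j \<in> B"] by simp
    then show ?thesis by simp
  qed
  have "(\<Sum>i\<in>\<Union>L. \<Sum>j\<in>\<Union>L. (if \<exists>A\<in>L. i \<in> A \<and> j \<in> A then (1/4::real) else 0))
      = (\<Sum>A\<in>L. \<Sum>i\<in>A. \<Sum>j\<in>\<Union>L. (if \<exists>B\<in>L. i \<in> B \<and> j \<in> B then (1/4::real) else 0))"
    using sum.Union_disjoint[OF finA disj] by simp
  also have "\<dots> = (\<Sum>A\<in>L. \<Sum>i\<in>A. real (card A) / 4)"
    by (rule sum.cong[OF refl], rule sum.cong[OF refl], rule inner, auto)
  also have "\<dots> = (\<Sum>A\<in>L. real (card A ^ 2)) / 4"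
    by (simp add: sum_divide_distrib power2_eq_square)
  finally show ?thesis .
qed

lemma prod_state_bound:
  fixes n :: "real^3"
  assumes nn: "norm n = 1"
    and finL: "finite L" and disj: "\<forall>A\<in>L. \<forall>B\<in>L. A \<noteq> B \<longrightarrow> A \<inter> B = {}"
    and UL: "\<Union>L = {1..N}"
    and unit: "\<forall>A\<in>L. ipS (configs A) (v A) (v A) = 1"
  shows "\<exists>c::real. (\<Sum>x\<in>configs {1..N}. (cmod (appS (configs {1..N}) (J_op N n) (prodvec L v) x
      - complex_of_real c * prodvec L v x))^2) \<le> (\<Sum>A\<in>L. real (card A ^ 2)) / 4"
proof -
  define I where "I = {1..N}"
  define S where "S = configs I"
  define \<psi> where "\<psi> = prodvec L v"
  have finI: "finite I" unfolding I_def by simp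
  have finS: "finite S" unfolding S_def using finI by (rule configs_finite)
  have finA: "\<forall>A\<in>L. finite A" using UL finI unfolding I_def by (metis Union_upper finite_subset)
  have nn3: "(n$1)^2 + (n$2)^2 + (n$3)^2 = 1" using norm3[OF nn] .
  have ipP: "ipS S (prodvec L f) (prodvec L g) = (\<Prod>A\<in>L. ipS (configs A) (f A) (g A))" for f g
    unfolding S_def I_def UL[symmetric] by (rule ip_prodvec[OF finL finA disj])
  have blk: "\<exists>A\<in>L. i \<in> A" if "i \<in> I" for i using that UL unfolding I_def by blast
  have Pv: "Pi_op n i \<psi> = prodvec L (v(A := Pi_op n i (v A)))" if "A \<in> L" "i \<in> A" for i A
    unfolding \<psi>_def using Pi_prodvec[OF finL that disj] by blast
  have psinorm: "ipS S \<psi> \<psi> = 1" unfolding \<psi>_def ipP using unit by simp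
  define a where "a = (\<lambda>i. ipS S \<psi> (Pi_op n i \<psi>))"
  have aloc: "a i = ipS (configs A) (v A) (Pi_op n i (v A))" if A: "A \<in> L" and i: "i \<in> A" for A i
  proof -
    have "a i = (\<Prod>C\<in>L. ipS (configs C) (v C) ((v(A := Pi_op n i (v A))) C))"
      unfolding a_def Pv[OF A i] unfolding \<psi>_def ipP by (rule refl)
    also have "\<dots> = ipS (configs A) (v A) ((v(A := Pi_op n i (v A))) A)"
      using unit by (intro prod_reduce1[OF finL A], auto)
    finally show ?thesis by simp
  qed
  have normP: "ipS S (Pi_op n i \<psi>) (Pi_op n i \<psi>) = 1/4" if i: "i \<in> I" for i
  proof -
    have "complex_of_real (\<Sum>x\<in>S. (cmod (\<psi> x))^2) = 1" using psinorm unfolding ipS_self by simp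
    then have s1: "(\<Sum>x\<in>S. (cmod (\<psi> x))^2) = 1" by (metis of_real_eq_1_iff)
    have h: "(\<Sum>x\<in>S. (cmod (Pi_op n i \<psi> x))^2) = 1/4"
      unfolding S_def using Pi_norm[OF finI i nn3, of \<psi>] s1 unfolding S_def by simp
    show ?thesis unfolding ipS_self h by simp
  qed
  have cross: "ipS S (Pi_op n i \<psi>) (Pi_op n j \<psi>) = cnj (a i) * a j"
    if A: "A \<in> L" and B: "B \<in> L" and AB: "A \<noteq> B" and i: "i \<in> A" and j: "j \<in> B" for A B i j
  proof -
    have "ipS S (Pi_op n i \<psi>) (Pi_op n j \<psi>)
        = (\<Prod>C\<in>L. ipS (configs C) ((v(A := Pi_op n i (v A))) C) ((v(B := Pi_op n j (v B))) C))"
      unfolding Pv[OF A i] Pv[OF B j] ipP by (rule refl)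
    also have "\<dots> = ipS (configs A) ((v(A := Pi_op n i (v A))) A) ((v(B := Pi_op n j (v B))) A)
        * ipS (configs B) ((v(A := Pi_op n i (v A))) B) ((v(B := Pi_op n j (v B))) B)"
      using unit by (intro prod_reduce2[OF finL A B AB], auto)
    also have "\<dots> = ipS (configs A) (Pi_op n i (v A)) (v A) * ipS (configs B) (v B) (Pi_op n j (v B))"
      using AB by simp
    also have "\<dots> = cnj (a i) * a j"
      using aloc[OF A i] aloc[OF B j] ipS_swap[of "configs A" "Pi_op n i (v A)" "v A"] by simp
    finally show ?thesis .
  qed
  define u where "u = (\<lambda>i x. Pi_op n i \<psi> x - a i * \<psi> x)"
  have uu: "ipS S (u i) (u j) = ipS S (Pi_op n i \<psi>) (Pi_op n j \<psi>) - a j * cnj (a i) - cnj (a i) * a j + cnj (a i) * a j" for i j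
    unfolding u_def ip_expand using psinorm ipS_swap[of S "Pi_op n i \<psi>" \<psi>] unfolding a_def by simp
  have ubd: "Re (ipS S (u i) (u j)) \<le> (if \<exists>A\<in>L. i \<in> A \<and> j \<in> A then 1/4 else 0)"
    if i: "i \<in> I" and j: "j \<in> I" for i j
  proof (cases "\<exists>A\<in>L. i \<in> A \<and> j \<in> A")
    case True
    have self: "Re (ipS S (u k) (u k)) \<le> 1/4" if k: "k \<in> I" for k
    proof -
      have "Re (ipS S (u k) (u k)) = 1/4 - Re (cnj (a k) * a k)" unfolding uu normP[OF k] by simp
      also have "\<dots> \<le> 1/4" by (simp add: cnj_mult_self)
      finally show ?thesis .
    qed
    have "Re (ipS S (u i) (u j)) \<le> (Re (ipS S (u i) (u i)) + Re (ipS S (u j) (u j))) / 2" by (rule re_ip_le)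
    also have "\<dots> \<le> 1/4" using self[OF i] self[OF j] by simp
    finally show ?thesis using True by simp
  next
    case False
    obtain A where A: "A \<in> L" "i \<in> A" using blk[OF i] by blast
    obtain B where B: "B \<in> L" "j \<in> B" using blk[OF j] by blast
    have AB: "A \<noteq> B" using False A B by blast
    have "ipS S (u i) (u j) = 0" unfolding uu cross[OF A(1) B(1) AB A(2) B(2)] by simp
    then show ?thesis using False by simp
  qed
  have hJ: "hermS S (J_op N n)" unfolding hermS_def using J_herm by blast
  have Japp: "appS S (J_op N n) \<psi> x = (\<Sum>i\<in>I. Pi_op n i \<psi> x)" if "x \<in> S" for x
    unfolding appS_def S_def I_def using J_app that unfolding S_def I_def by blast
  have suma: "(\<Sum>i\<in>I. a i) = ipS S \<psi> (appS S (J_op N n) \<psi>)"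
  proof -
    have "ipS S \<psi> (appS S (J_op N n) \<psi>) = (\<Sum>x\<in>S. cnj (\<psi> x) * (\<Sum>i\<in>I. Pi_op n i \<psi> x))"
      unfolding ipS_def using Japp by simp
    also have "\<dots> = (\<Sum>i\<in>I. a i)" unfolding a_def ipS_def
      by (simp add: sum_distrib_left, rule sum.swap)
    finally show ?thesis by simp
  qed
  have ima: "Im (\<Sum>i\<in>I. a i) = 0" unfolding suma by (rule herm_quad_real2[OF hJ])
  define c where "c = Re (\<Sum>i\<in>I. a i)"
  have cR: "complex_of_real c = (\<Sum>i\<in>I. a i)" unfolding c_def using ima by (simp add: complex_eq_iff)
  have vsum: "appS S (J_op N n) \<psi> x - complex_of_real c * \<psi> x = (\<Sum>i\<in>I. u i x)" if "x \<in> S" for x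
    unfolding Japp[OF that] cR u_def by (simp add: sum_subtractf sum_distrib_right)
  have "(\<Sum>x\<in>S. (cmod (appS S (J_op N n) \<psi> x - complex_of_real c * \<psi> x))^2)
      = Re (ipS S (\<lambda>x. \<Sum>i\<in>I. u i x) (\<lambda>x. \<Sum>i\<in>I. u i x))"
    unfolding ipS_self using vsum by simp
  also have "\<dots> = (\<Sum>i\<in>I. \<Sum>j\<in>I. Re (ipS S (u i) (u j)))" unfolding ip_sums by (simp add: Re_sum)
  also have "\<dots> \<le> (\<Sum>i\<in>I. \<Sum>j\<in>I. (if \<exists>A\<in>L. i \<in> A \<and> j \<in> A then 1/4 else 0))"
    using ubd by (intro sum_mono, auto)
  also have "\<dots> = (\<Sum>A\<in>L. real (card A ^ 2)) / 4"
    unfolding I_def UL[symmetric] by (rule count_pairs[OF finL finA disj])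
  finally show ?thesis unfolding S_def I_def \<psi>_def by blast
qed

lemma pair_alg:
  fixes lk lm c :: real
  assumes s: "lk + lm > 0"
  shows "lm * ((-8 * ((lk - lm) / (lk + lm)) - 4 * ((lk - lm) / (lk + lm))^2) * c)
       + lk * ((-8 * ((lm - lk) / (lm + lk)) - 4 * ((lm - lk) / (lm + lk))^2) * c)
       = 4 * ((lk - lm)^2 / (lk + lm) * c)"
proof -
  define r where "r = (lk - lm) / (lk + lm)"
  have r2: "(lm - lk) / (lm + lk) = - r" unfolding r_def by (simp add: add.commute minus_divide_left)
  have rs: "r * (lk + lm) = lk - lm" unfolding r_def using s by simp
  have t: "(lk - lm)^2 / (lk + lm) = r * (lk - lm)" unfolding r_def by (simp add: power2_eq_square)
  have "lm * ((-8 * r - 4 * r^2) * c) + lk * ((-8 * (- r) - 4 * (- r)^2) * c) - 4 * (r * (lk - lm) * c)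
      = 4 * r * c * ((lk - lm) - r * (lk + lm))"
    by (simp add: algebra_simps power2_eq_square)
  also have "\<dots> = 0" using rs by simp
  finally show ?thesis unfolding r2 t r_def[symmetric] by simp
qed

lemma Tform:
  fixes r :: real and a :: complex
  shows "Re (4 * \<i> * cnj ((- 2 * \<i> * complex_of_real r) * a) * a) - (cmod ((- 2 * \<i> * complex_of_real r) * a))^2
       = (-8 * r - 4 * r^2) * (cmod a)^2"
proof -
  have "cnj ((- 2 * \<i> * complex_of_real r) * a) * a = 2 * \<i> * complex_of_real r * (cnj a * a)"
    by (simp add: algebra_simps)
  then have "Re (4 * \<i> * cnj ((- 2 * \<i> * complex_of_real r) * a) * a) = -8 * r * (cmod a)^2"
    by (simp add: mult.assoc cnj_mult_self)
  moreover have "(cmod ((- 2 * \<i> * complex_of_real r) * a))^2 = 4 * r^2 * (cmod a)^2"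
    by (simp add: norm_mult power_mult_distrib)
  ultimately show ?thesis by (simp add: algebra_simps)
qed
lemma QFI_sum_eq:
  fixes e :: "cfg \<Rightarrow> cfg \<Rightarrow> complex" and lam :: "cfg \<Rightarrow> real" and A \<rho> :: qop
  assumes finS: "finite S"
    and orth: "\<forall>k\<in>S. \<forall>l\<in>S. (\<Sum>x\<in>S. cnj (e k x) * e l x) = (if k = l then 1 else 0)"
    and dec: "\<forall>x\<in>S. \<forall>y\<in>S. \<rho> x y = (\<Sum>k\<in>S. complex_of_real (lam k) * e k x * cnj (e k y))"
    and hA: "hermS S A"
  defines "a \<equiv> \<lambda>k l. \<Sum>x\<in>S. \<Sum>y\<in>S. cnj (e k x) * A x y * e l y"
  defines "Xc \<equiv> \<lambda>k l. (if lam k + lam l > 0 then - 2 * \<i> * complex_of_real ((lam k - lam l) / (lam k + lam l)) else 0) * a k l"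
  defines "X \<equiv> \<lambda>x y. \<Sum>k\<in>S. \<Sum>l\<in>S. Xc k l * e k x * cnj (e l y)"
  shows "hermS S X \<and> 2 * (\<Sum>k\<in>S. \<Sum>l\<in>S. if lam k + lam l > 0 then (lam k - lam l)^2 / (lam k + lam l) * (cmod (a k l))^2 else 0) = Phi S A X \<rho>"
proof
  have aherm: "a l k = cnj (a k l)" for k l
  proof -
    have "cnj (a k l) = (\<Sum>x\<in>S. \<Sum>y\<in>S. e k x * cnj (A x y) * cnj (e l y))" unfolding a_def by simp
    also have "\<dots> = (\<Sum>x\<in>S. \<Sum>y\<in>S. e k x * A y x * cnj (e l y))"
    proof (rule sum.cong[OF refl], rule sum.cong[OF refl])
      fix x y assume "x \<in> S" "y \<in> S"
      then have "A y x = cnj (A x y)" using hA unfolding hermS_def by blast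
      then show "e k x * cnj (A x y) * cnj (e l y) = e k x * A y x * cnj (e l y)" by simp
    qed
    also have "\<dots> = (\<Sum>y\<in>S. \<Sum>x\<in>S. e k x * A y x * cnj (e l y))" by (rule sum.swap)
    also have "\<dots> = a l k" unfolding a_def by (simp add: ac_simps)
    finally show ?thesis by simp
  qed
  have Xcherm: "cnj (Xc l k) = Xc k l" for k l
  proof -
    have "cnj (Xc l k) = cnj (if lam l + lam k > 0 then - 2 * \<i> * complex_of_real ((lam l - lam k) / (lam l + lam k)) else 0) * a k l"
      unfolding Xc_def using aherm[of k l] by simp
    also have "cnj (if lam l + lam k > 0 then - 2 * \<i> * complex_of_real ((lam l - lam k) / (lam l + lam k)) else 0)
        = (if lam k + lam l > 0 then - 2 * \<i> * complex_of_real ((lam k - lam l) / (lam k + lam l)) else 0)"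
    proof -
      have s1: "lam l + lam k = lam k + lam l" by simp
      have d1: "(lam l - lam k) / (lam k + lam l) = - ((lam k - lam l) / (lam k + lam l))"
        by (metis minus_diff_eq minus_divide_left)
      show ?thesis unfolding s1 d1 by simp
    qed
    finally show ?thesis unfolding Xc_def by simp
  qed
  show "hermS S X" unfolding hermS_def
  proof (intro ballI)
    fix x y assume "x \<in> S" "y \<in> S"
    have "cnj (X y x) = (\<Sum>k\<in>S. \<Sum>l\<in>S. cnj (Xc k l) * cnj (e k y) * e l x)" unfolding X_def by simp
    also have "\<dots> = (\<Sum>l\<in>S. \<Sum>k\<in>S. cnj (Xc k l) * cnj (e k y) * e l x)" by (rule sum.swap)
    also have "\<dots> = X x y" unfolding X_def Xcherm by (simp add: ac_simps)
    finally show "X x y = cnj (X y x)" by simp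
  qed
  have Xe: "appS S X (e m) = (\<lambda>x. \<Sum>k\<in>S. Xc k m * e k x)" if m: "m \<in> S" for m
  proof
    fix x
    have "appS S X (e m) x = (\<Sum>k\<in>S. \<Sum>l\<in>S. Xc k l * e k x * (\<Sum>y\<in>S. cnj (e l y) * e m y))"
      unfolding appS_def X_def
      by (simp add: sum_distrib_left sum_distrib_right ac_simps, subst sum.swap, rule sum.cong[OF refl], subst sum.swap, simp add: ac_simps)
    also have "\<dots> = (\<Sum>k\<in>S. \<Sum>l\<in>S. Xc k l * e k x * (if l = m then 1 else 0))"
      using orth m by simp
    also have "\<dots> = (\<Sum>k\<in>S. Xc k m * e k x)" using finS m by (simp add: sum_delta_r)
    finally show "appS S X (e m) x = (\<Sum>k\<in>S. Xc k m * e k x)" .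
  qed
  have dec': "\<forall>x\<in>S. \<forall>y\<in>S. \<rho> x y = (\<Sum>k\<in>S. complex_of_real (lam k) * (e k x * cnj (e k y)))"
    using dec by (simp add: mult.assoc)
  have Phi1: "Phi S A X \<rho> = (\<Sum>m\<in>S. lam m * Re (4 * \<i> * ipS S (appS S X (e m)) (appS S A (e m)) - ipS S (appS S X (e m)) (appS S X (e m))))"
    unfolding Phi_lin[OF finS dec'] Phi_pure by (rule refl)
  have ipXA: "ipS S (appS S X (e m)) (appS S A (e m)) = (\<Sum>k\<in>S. cnj (Xc k m) * a k m)" if m: "m \<in> S" for m
  proof -
    have "ipS S (appS S X (e m)) (appS S A (e m)) = (\<Sum>x\<in>S. \<Sum>k\<in>S. cnj (Xc k m) * (cnj (e k x) * (\<Sum>y\<in>S. A x y * e m y)))"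
      unfolding Xe[OF m] unfolding ipS_def appS_def by (simp add: sum_distrib_right mult.assoc)
    also have "\<dots> = (\<Sum>k\<in>S. \<Sum>x\<in>S. cnj (Xc k m) * (cnj (e k x) * (\<Sum>y\<in>S. A x y * e m y)))" by (rule sum.swap)
    also have "\<dots> = (\<Sum>k\<in>S. cnj (Xc k m) * a k m)" unfolding a_def
      by (simp add: sum_distrib_left mult.assoc)
    finally show ?thesis .
  qed
  have ipXX: "ipS S (appS S X (e m)) (appS S X (e m)) = (\<Sum>k\<in>S. cnj (Xc k m) * Xc k m)" if m: "m \<in> S" for m
  proof -
    have "ipS S (appS S X (e m)) (appS S X (e m)) = (\<Sum>x\<in>S. (\<Sum>k\<in>S. cnj (Xc k m) * cnj (e k x)) * (\<Sum>l\<in>S. Xc l m * e l x))"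
      unfolding Xe[OF m] ipS_def by simp
    also have "\<dots> = (\<Sum>x\<in>S. \<Sum>k\<in>S. \<Sum>l\<in>S. (cnj (Xc k m) * cnj (e k x)) * (Xc l m * e l x))"
      by (simp only: sum_product)
    also have "\<dots> = (\<Sum>k\<in>S. \<Sum>x\<in>S. \<Sum>l\<in>S. (cnj (Xc k m) * cnj (e k x)) * (Xc l m * e l x))" by (rule sum.swap)
    also have "\<dots> = (\<Sum>k\<in>S. \<Sum>l\<in>S. \<Sum>x\<in>S. (cnj (Xc k m) * cnj (e k x)) * (Xc l m * e l x))"
      by (rule sum.cong[OF refl], rule sum.swap)
    also have "\<dots> = (\<Sum>k\<in>S. \<Sum>l\<in>S. cnj (Xc k m) * (Xc l m * (\<Sum>x\<in>S. cnj (e k x) * e l x)))"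
      by (simp add: sum_distrib_left ac_simps)
    also have "\<dots> = (\<Sum>k\<in>S. \<Sum>l\<in>S. cnj (Xc k m) * (Xc l m * (if k = l then 1 else 0)))"
      using orth by simp
    also have "\<dots> = (\<Sum>k\<in>S. cnj (Xc k m) * Xc k m)"
      by (rule sum.cong[OF refl], rule sum_delta_r3[OF finS], assumption)
    finally show ?thesis .
  qed
  define F where "F = (\<lambda>k m. lam m * (if lam k + lam m > 0 then
      (-8 * ((lam k - lam m) / (lam k + lam m)) - 4 * ((lam k - lam m) / (lam k + lam m))^2) * (cmod (a k m))^2 else 0))"
  have Tk: "Re (4 * \<i> * cnj (Xc k m) * a k m) - (cmod (Xc k m))^2 = (if lam k + lam m > 0 then
      (-8 * ((lam k - lam m) / (lam k + lam m)) - 4 * ((lam k - lam m) / (lam k + lam m))^2) * (cmod (a k m))^2 else 0)" for k m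
  proof (cases "lam k + lam m > 0")
    case True
    have Xcm: "Xc k m = (- 2 * \<i> * complex_of_real ((lam k - lam m) / (lam k + lam m))) * a k m"
      unfolding Xc_def using True by simp
    show ?thesis unfolding Xcm by (subst if_P[OF True], rule Tform)
  next
    case False
    then have "Xc k m = 0" unfolding Xc_def by simp
    then show ?thesis using False by simp
  qed
  have Phi2: "Phi S A X \<rho> = (\<Sum>m\<in>S. \<Sum>k\<in>S. F k m)"
    unfolding Phi1 F_def
  proof (rule sum.cong[OF refl])
    fix m assume m: "m \<in> S"
    have "Re (4 * \<i> * ipS S (appS S X (e m)) (appS S A (e m)) - ipS S (appS S X (e m)) (appS S X (e m)))
       = (\<Sum>k\<in>S. Re (4 * \<i> * cnj (Xc k m) * a k m) - (cmod (Xc k m))^2)"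
      unfolding ipXA[OF m] ipXX[OF m] by (simp add: Re_sum sum_distrib_left sum_subtractf mult.assoc cnj_mult_self)
    then show "lam m * Re (4 * \<i> * ipS S (appS S X (e m)) (appS S A (e m)) - ipS S (appS S X (e m)) (appS S X (e m)))
      = (\<Sum>k\<in>S. lam m * (if lam k + lam m > 0 then
      (-8 * ((lam k - lam m) / (lam k + lam m)) - 4 * ((lam k - lam m) / (lam k + lam m))^2) * (cmod (a k m))^2 else 0))"
      unfolding Tk by (simp add: sum_distrib_left)
  qed
  have sym: "2 * Phi S A X \<rho> = (\<Sum>k\<in>S. \<Sum>m\<in>S. F k m + F m k)"
  proof -
    have "(\<Sum>m\<in>S. \<Sum>k\<in>S. F k m) = (\<Sum>k\<in>S. \<Sum>m\<in>S. F k m)" by (rule sum.swap)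
    then show ?thesis unfolding Phi2 by (simp add: sum.distrib)
  qed
  have pair: "F k m + F m k = 4 * (if lam k + lam m > 0 then (lam k - lam m)^2 / (lam k + lam m) * (cmod (a k m))^2 else 0)" for k m
  proof (cases "lam k + lam m > 0")
    case True
    have c: "cmod (a m k) = cmod (a k m)" using aherm[of m k] by simp
    have s: "lam m + lam k > 0" using True by simp
    show ?thesis unfolding F_def using True s c pair_alg[OF True, of "(cmod (a k m))^2"] by simp
  next
    case False
    then have s: "\<not> lam m + lam k > 0" by simp
    show ?thesis unfolding F_def using False s by simp
  qed
  show "2 * (\<Sum>k\<in>S. \<Sum>l\<in>S. if lam k + lam l > 0 then (lam k - lam l)^2 / (lam k + lam l) * (cmod (a k l))^2 else 0) = Phi S A X \<rho>"
    using sym unfolding pair by (simp add: sum_distrib_left[symmetric])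
qed

lemma pure_prod_good:
  fixes n :: "real^3"
  assumes nn: "norm n = 1"
    and finL: "finite L" and disj: "\<forall>A\<in>L. \<forall>B\<in>L. A \<noteq> B \<longrightarrow> A \<inter> B = {}"
    and UL: "\<Union>L = {1..N}"
    and unit: "\<forall>A\<in>L. ipS (configs A) (v A) (v A) = 1"
    and bd: "(\<Sum>A\<in>L. real (card A ^ 2)) \<le> B"
  shows "Good (configs {1..N}) (J_op N n) B (\<lambda>x y. prodvec L v x * cnj (prodvec L v y))"
  unfolding Good_def
proof (intro conjI allI impI)
  show "hermS (configs {1..N}) (\<lambda>x y. prodvec L v x * cnj (prodvec L v y))"
    unfolding hermS_def by simp
  fix X assume X: "hermS (configs {1..N}) X"
  obtain c :: real where c: "(\<Sum>x\<in>configs {1..N}. (cmod (appS (configs {1..N}) (J_op N n) (prodvec L v) x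
      - complex_of_real c * prodvec L v x))^2) \<le> (\<Sum>A\<in>L. real (card A ^ 2)) / 4"
    using prod_state_bound[OF nn finL disj UL unit] by blast
  have "Phi (configs {1..N}) (J_op N n) X (\<lambda>x y. prodvec L v x * cnj (prodvec L v y))
      \<le> 4 * (\<Sum>x\<in>configs {1..N}. (cmod (appS (configs {1..N}) (J_op N n) (prodvec L v) x
      - complex_of_real c * prodvec L v x))^2)"
    unfolding Phi_pure by (rule pure_bound[OF X])
  also have "\<dots> \<le> (\<Sum>A\<in>L. real (card A ^ 2))" using c by simp
  also have "\<dots> \<le> B" by (rule bd)
  finally show "Phi (configs {1..N}) (J_op N n) X (\<lambda>x y. prodvec L v x * cnj (prodvec L v y)) \<le> B" .
qed

lemma partition_facts:
  assumes P: "is_partition N L"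
  shows "finite L" "\<forall>A\<in>L. \<forall>B\<in>L. A \<noteq> B \<longrightarrow> A \<inter> B = {}" "\<Union>L = {1..N}" "\<forall>A\<in>L. finite A"
    "\<forall>A\<in>L. A \<noteq> {}"
proof -
  show UL: "\<Union>L = {1..N}" using P unfolding is_partition_def by blast
  show "\<forall>A\<in>L. \<forall>B\<in>L. A \<noteq> B \<longrightarrow> A \<inter> B = {}" using P unfolding is_partition_def by blast
  show "\<forall>A\<in>L. A \<noteq> {}" using P unfolding is_partition_def by blast
  have "L \<subseteq> Pow {1..N}" using UL by blast
  then show "finite L" by (rule finite_subset, simp)
  show "\<forall>A\<in>L. finite A" using UL by (metis Union_upper finite_atLeastAtMost finite_subset)
qed

lemma partition_bound:
  assumes P: "is_partition N L" and mw: "max_block L \<le> w" and hL: "card L \<ge> h"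
  shows "(\<Sum>A\<in>L. real (card A ^ 2)) \<le> real w * (real N - real h) + real N"
proof -
  note pf = partition_facts[OF P]
  have cardle: "card A \<le> w" if "A \<in> L" for A
  proof -
    have "card A \<le> Max (card ` L)" using pf(1) that by simp
    then show ?thesis using mw unfolding max_block_def by simp
  qed
  have cardge: "card A \<ge> 1" if "A \<in> L" for A
    using pf(4,5) that by (simp add: Suc_le_eq card_gt_0_iff)
  have sumcard: "(\<Sum>A\<in>L. card A) = N"
  proof -
    have "card (\<Union>L) = (\<Sum>A\<in>L. card A)"
      using pf(2,4) by (intro card_Union_disjoint, auto simp: pairwise_def disjnt_def)
    then show ?thesis using pf(3) by simp
  qed
  have "(\<Sum>A\<in>L. real (card A ^ 2)) \<le> (\<Sum>A\<in>L. real w * (real (card A) - 1) + real (card A))"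
  proof (rule sum_mono)
    fix A assume A: "A \<in> L"
    have c1: "real (card A) \<ge> 1" using cardge[OF A] by simp
    have cw: "real (card A) \<le> real w" using cardle[OF A] by simp
    have "real (card A) * (real (card A) - 1) \<le> real w * (real (card A) - 1)"
      using c1 cw by (intro mult_right_mono, auto)
    then show "real (card A ^ 2) \<le> real w * (real (card A) - 1) + real (card A)"
      by (simp add: power2_eq_square algebra_simps)
  qed
  also have "\<dots> = real w * (real N - real (card L)) + real N"
  proof -
    have "(\<Sum>A\<in>L. real (card A)) = real N" using sumcard by (metis of_nat_sum)
    moreover have "(\<Sum>A\<in>L. real w * real (card A)) = real w * (\<Sum>A\<in>L. real (card A))"
      by (simp add: sum_distrib_left)
    ultimately show ?thesis by (simp add: sum.distrib sum_subtractf algebra_simps)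
  qed
  also have "\<dots> \<le> real w * (real N - real h) + real N"
    using hL by (intro add_right_mono mult_left_mono, auto)
  finally show ?thesis .
qed
lemma sum_two_deltas:
  assumes fin: "finite C" and x: "x \<in> C" and y: "y \<in> C" and xy: "x \<noteq> y"
  shows "(\<Sum>b\<in>C. f b * (if b = x then \<alpha> else if b = y then \<beta> else 0)) = f x * \<alpha> + f y * (\<beta>::complex)"
proof -
  have "(\<Sum>b\<in>C. f b * (if b = x then \<alpha> else if b = y then \<beta> else 0))
      = (\<Sum>b\<in>C. (if b = x then f b * \<alpha> else 0) + (if b = y then f b * \<beta> else 0))"
    using xy by (intro sum.cong refl, auto)
  also have "\<dots> = f x * \<alpha> + f y * \<beta>" using fin x y by (simp add: sum.distrib sum.delta')
  finally show ?thesis .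
qed

lemma sum_delta_l2: "finite S \<Longrightarrow> (\<Sum>a\<in>S. (if a = x then 1 else 0) * (f a :: complex)) = (if x \<in> S then f x else 0)"
proof -
  assume fin: "finite S"
  have "(\<Sum>a\<in>S. (if a = x then 1 else 0) * f a) = (\<Sum>a\<in>S. if a = x then f a else 0)"
    by (rule sum.cong, auto)
  then show ?thesis using fin by (simp add: sum.delta')
qed

lemma cnj_delta: "cnj (if P then 1 else 0) = (if P then 1 else 0)" by simp

lemma quad2:
  fixes \<alpha> \<beta> :: complex
  assumes fin: "finite C" and x: "x \<in> C" and y: "y \<in> C" and xy: "x \<noteq> y"
  defines "V \<equiv> (\<lambda>z. if z = x then \<alpha> else if z = y then \<beta> else 0)"
  shows "(\<Sum>a\<in>C. \<Sum>b\<in>C. cnj (V a) * \<rho> a b * V b)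
       = cnj \<alpha> * \<alpha> * \<rho> x x + cnj \<alpha> * \<beta> * \<rho> x y + cnj \<beta> * \<alpha> * \<rho> y x + cnj \<beta> * \<beta> * \<rho> y y"
proof -
  have inner: "(\<Sum>b\<in>C. cnj (V a) * \<rho> a b * V b) = cnj (V a) * (\<rho> a x * \<alpha> + \<rho> a y * \<beta>)" for a
  proof -
    have "(\<Sum>b\<in>C. cnj (V a) * \<rho> a b * V b) = cnj (V a) * (\<Sum>b\<in>C. \<rho> a b * V b)"
      by (simp add: sum_distrib_left mult.assoc)
    also have "(\<Sum>b\<in>C. \<rho> a b * V b) = \<rho> a x * \<alpha> + \<rho> a y * \<beta>"
      unfolding V_def by (rule sum_two_deltas[OF fin x y xy])
    finally show ?thesis .
  qed
  have "(\<Sum>a\<in>C. cnj (V a) * (\<rho> a x * \<alpha> + \<rho> a y * \<beta>))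
      = (\<Sum>a\<in>C. (\<rho> a x * \<alpha> + \<rho> a y * \<beta>) * (if a = x then cnj \<alpha> else if a = y then cnj \<beta> else 0))"
    unfolding V_def by (intro sum.cong refl, auto)
  also have "\<dots> = (\<rho> x x * \<alpha> + \<rho> x y * \<beta>) * cnj \<alpha> + (\<rho> y x * \<alpha> + \<rho> y y * \<beta>) * cnj \<beta>"
    by (rule sum_two_deltas[OF fin x y xy])
  finally show ?thesis unfolding inner by (simp add: algebra_simps)
qed

lemma quad1:
  assumes fin: "finite C" and x: "x \<in> C"
  shows "(\<Sum>a\<in>C. \<Sum>b\<in>C. cnj ((\<lambda>z. if z = x then 1 else 0) a) * \<rho> a b * (\<lambda>z. if z = x then 1 else 0) b) = \<rho> x x"
  by (simp only: cnj_delta sum_delta_r[OF fin] x if_True sum_delta_l2[OF fin])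

lemma state_herm:
  assumes st: "is_state A \<sigma>" and fin: "finite (configs A)" and x: "x \<in> configs A" and y: "y \<in> configs A"
  shows "\<sigma> x y = cnj (\<sigma> y x)"
proof -
  have q: "Im (\<Sum>a\<in>configs A. \<Sum>b\<in>configs A. cnj (v a) * \<sigma> a b * v b) = 0" for v
    using st unfolding is_state_def Let_def by blast
  have dx: "Im (\<sigma> x x) = 0" using q[of "\<lambda>z. if z = x then 1 else 0"] quad1[OF fin x, where \<rho> = \<sigma>] by simp
  have dy: "Im (\<sigma> y y) = 0" using q[of "\<lambda>z. if z = y then 1 else 0"] quad1[OF fin y, where \<rho> = \<sigma>] by simp
  show ?thesis
  proof (cases "x = y")
    case True
    then show ?thesis using dx by (simp add: complex_eq_iff)
  next
    case False
    have h1: "Im (\<sigma> x y + \<sigma> y x) = 0"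
      using q[of "\<lambda>z. if z = x then 1 else if z = y then 1 else 0"] quad2[OF fin x y False, where \<rho> = \<sigma> and \<alpha> = 1 and \<beta> = 1] dx dy
      by simp
    have h2: "Re (\<sigma> x y) - Re (\<sigma> y x) = 0"
      using q[of "\<lambda>z. if z = x then 1 else if z = y then \<i> else 0"] quad2[OF fin x y False, where \<rho> = \<sigma> and \<alpha> = 1 and \<beta> = \<i>] dx dy
      by simp
    show ?thesis using h1 h2 by (simp add: complex_eq_iff)
  qed
qed

lemma sum_prod_factor: "(\<Sum>a\<in>C. \<Sum>b\<in>D. c * (f a * g b)) = (c::complex) * ((\<Sum>a\<in>C. f a) * (\<Sum>b\<in>D. g b))"
proof -
  have "c * ((\<Sum>a\<in>C. f a) * (\<Sum>b\<in>D. g b)) = c * (\<Sum>a\<in>C. \<Sum>b\<in>D. f a * g b)" by (simp only: sum_product)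
  also have "\<dots> = (\<Sum>a\<in>C. \<Sum>b\<in>D. c * (f a * g b))" by (simp add: sum_distrib_left)
  finally show ?thesis by simp
qed

lemma block_decomp:
  assumes st: "is_state A \<sigma>" and finA: "finite A"
  shows "\<exists>e \<mu>. (\<forall>k\<in>configs A. \<mu> k \<ge> 0) \<and> (\<Sum>k\<in>configs A. \<mu> k) = 1
    \<and> (\<forall>k\<in>configs A. ipS (configs A) (e k) (e k) = 1)
    \<and> (\<forall>x\<in>configs A. \<forall>y\<in>configs A. \<sigma> x y = (\<Sum>k\<in>configs A. complex_of_real (\<mu> k) * e k x * cnj (e k y)))"
proof -
  define C where "C = configs A"
  have finC: "finite C" unfolding C_def using finA by (rule configs_finite)
  have herm: "\<forall>x\<in>C. \<forall>y\<in>C. \<sigma> x y = cnj (\<sigma> y x)"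
    unfolding C_def using state_herm[OF st configs_finite[OF finA]] by blast
  obtain e \<mu> where orth: "\<forall>k\<in>C. \<forall>l\<in>C. (\<Sum>x\<in>C. cnj (e k x) * e l x) = (if k = l then 1 else 0)"
    and dec: "\<forall>x\<in>C. \<forall>y\<in>C. \<sigma> x y = (\<Sum>k\<in>C. complex_of_real (\<mu> k) * e k x * cnj (e k y))"
    using spectral_ind[OF finC refl herm] by blast
  have unit: "\<forall>k\<in>C. ipS C (e k) (e k) = 1" using orth unfolding ipS_def by simp
  have qk: "(\<Sum>a\<in>C. \<Sum>b\<in>C. cnj (e k a) * \<sigma> a b * e k b) = complex_of_real (\<mu> k)" if k: "k \<in> C" for k
  proof -
    have "(\<Sum>a\<in>C. \<Sum>b\<in>C. cnj (e k a) * \<sigma> a b * e k b)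
        = (\<Sum>a\<in>C. \<Sum>b\<in>C. \<Sum>m\<in>C. complex_of_real (\<mu> m) * ((cnj (e k a) * e m a) * (cnj (e m b) * e k b)))"
      using dec by (intro sum.cong refl, simp add: sum_distrib_left sum_distrib_right ac_simps)
    also have "\<dots> = (\<Sum>a\<in>C. \<Sum>m\<in>C. \<Sum>b\<in>C. complex_of_real (\<mu> m) * ((cnj (e k a) * e m a) * (cnj (e m b) * e k b)))"
      by (rule sum.cong[OF refl], rule sum.swap)
    also have "\<dots> = (\<Sum>m\<in>C. \<Sum>a\<in>C. \<Sum>b\<in>C. complex_of_real (\<mu> m) * ((cnj (e k a) * e m a) * (cnj (e m b) * e k b)))"
      by (rule sum.swap)
    also have "\<dots> = (\<Sum>m\<in>C. complex_of_real (\<mu> m) * ((\<Sum>a\<in>C. cnj (e k a) * e m a) * (\<Sum>b\<in>C. cnj (e m b) * e k b)))"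
      by (rule sum.cong[OF refl], rule sum_prod_factor)
    also have "\<dots> = (\<Sum>m\<in>C. complex_of_real (\<mu> m) * ((if k = m then 1 else 0) * (if m = k then 1 else 0)))"
      using orth k by simp
    also have "\<dots> = complex_of_real (\<mu> k)" using finC k by (simp add: if_distrib sum.delta cong: if_cong)
    finally show ?thesis .
  qed
  have nonneg: "\<forall>k\<in>C. \<mu> k \<ge> 0"
  proof
    fix k assume k: "k \<in> C"
    have "Re (\<Sum>a\<in>C. \<Sum>b\<in>C. cnj (e k a) * \<sigma> a b * e k b) \<ge> 0"
      using st unfolding is_state_def Let_def C_def by blast
    then show "\<mu> k \<ge> 0" unfolding qk[OF k] by simp
  qed
  have tr: "(\<Sum>x\<in>C. \<sigma> x x) = 1" using st unfolding is_state_def C_def by blast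
  have "(\<Sum>x\<in>C. \<sigma> x x) = (\<Sum>x\<in>C. \<Sum>m\<in>C. complex_of_real (\<mu> m) * (cnj (e m x) * e m x))"
    using dec by (intro sum.cong refl, simp add: ac_simps)
  also have "\<dots> = (\<Sum>m\<in>C. complex_of_real (\<mu> m) * (\<Sum>x\<in>C. cnj (e m x) * e m x))"
    by (subst sum.swap, simp add: sum_distrib_left)
  also have "\<dots> = complex_of_real (\<Sum>m\<in>C. \<mu> m)" using orth by simp
  finally have "(\<Sum>m\<in>C. \<mu> m) = 1" using tr by (metis of_real_eq_1_iff of_real_sum)
  then show ?thesis using nonneg unit dec unfolding C_def by blast
qed

lemma prodop_good:
  fixes n :: "real^3"
  assumes nn: "norm n = 1" and P: "is_partition N L" and st: "\<forall>A\<in>L. is_state A (r A)"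
    and bd: "(\<Sum>A\<in>L. real (card A ^ 2)) \<le> B"
  shows "Good (configs {1..N}) (J_op N n) B (prod_op L r)"
proof -
  note pf = partition_facts[OF P]
  have ex: "\<forall>A\<in>L. \<exists>p. (\<forall>k\<in>configs A. snd p k \<ge> 0) \<and> (\<Sum>k\<in>configs A. snd p k) = 1
    \<and> (\<forall>k\<in>configs A. ipS (configs A) (fst p k) (fst p k) = 1)
    \<and> (\<forall>x\<in>configs A. \<forall>y\<in>configs A. r A x y = (\<Sum>k\<in>configs A. complex_of_real (snd p k) * fst p k x * cnj (fst p k y)))"
  proof
    fix A assume A: "A \<in> L"
    obtain e \<mu> where "(\<forall>k\<in>configs A. \<mu> k \<ge> 0) \<and> (\<Sum>k\<in>configs A. \<mu> k) = 1
    \<and> (\<forall>k\<in>configs A. ipS (configs A) (e k) (e k) = 1)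
    \<and> (\<forall>x\<in>configs A. \<forall>y\<in>configs A. r A x y = (\<Sum>k\<in>configs A. complex_of_real (\<mu> k) * e k x * cnj (e k y)))"
      using block_decomp[of A "r A"] st pf(4) A by blast
    then show "\<exists>p. (\<forall>k\<in>configs A. snd p k \<ge> 0) \<and> (\<Sum>k\<in>configs A. snd p k) = 1
    \<and> (\<forall>k\<in>configs A. ipS (configs A) (fst p k) (fst p k) = 1)
    \<and> (\<forall>x\<in>configs A. \<forall>y\<in>configs A. r A x y = (\<Sum>k\<in>configs A. complex_of_real (snd p k) * fst p k x * cnj (fst p k y)))"
      by (intro exI[of _ "(e, \<mu>)"], simp)
  qed
  obtain f where f: "\<forall>A\<in>L. (\<forall>k\<in>configs A. snd (f A) k \<ge> 0) \<and> (\<Sum>k\<in>configs A. snd (f A) k) = 1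
    \<and> (\<forall>k\<in>configs A. ipS (configs A) (fst (f A) k) (fst (f A) k) = 1)
    \<and> (\<forall>x\<in>configs A. \<forall>y\<in>configs A. r A x y = (\<Sum>k\<in>configs A. complex_of_real (snd (f A) k) * fst (f A) k x * cnj (fst (f A) k y)))"
    using bchoice[OF ex] by (elim exE) blast
  define E where "E = (\<lambda>A. fst (f A))"
  define Mu where "Mu = (\<lambda>A. snd (f A))"
  have Mu0: "\<And>A k. A \<in> L \<Longrightarrow> k \<in> configs A \<Longrightarrow> Mu A k \<ge> 0" using f unfolding Mu_def by blast
  have Mu1: "\<And>A. A \<in> L \<Longrightarrow> (\<Sum>k\<in>configs A. Mu A k) = 1" using f unfolding Mu_def by blast
  have Eu: "\<And>A k. A \<in> L \<Longrightarrow> k \<in> configs A \<Longrightarrow> ipS (configs A) (E A k) (E A k) = 1" using f unfolding E_def by blast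
  have Ed: "\<And>A x y. A \<in> L \<Longrightarrow> x \<in> configs A \<Longrightarrow> y \<in> configs A \<Longrightarrow>
      r A x y = (\<Sum>k\<in>configs A. complex_of_real (Mu A k) * E A k x * cnj (E A k y))"
    using f unfolding E_def Mu_def by blast
  define T where "T = PiE L (\<lambda>A. configs A)"
  have finT: "finite T" unfolding T_def using pf(1,4) configs_finite by (intro finite_PiE, auto)
  define W where "W = (\<lambda>t. \<Prod>A\<in>L. Mu A (t A))"
  define \<psi> where "\<psi> = (\<lambda>t. prodvec L (\<lambda>A. E A (t A)))"
  show ?thesis
  proof (rule Good_convex[OF finT, where p = W and \<tau> = "\<lambda>t x y. \<psi> t x * cnj (\<psi> t y)"])
    show "\<forall>t\<in>T. W t \<ge> 0" unfolding W_def T_def using Mu0 by (intro ballI prod_nonneg, auto simp: PiE_def)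
    have "(\<Prod>A\<in>L. \<Sum>k\<in>configs A. Mu A k) = (\<Sum>t\<in>T. W t)"
      unfolding T_def W_def using pf(1,4) configs_finite by (intro prod_sum_PiE, auto)
    then show "(\<Sum>t\<in>T. W t) = 1" using Mu1 by simp
    show "\<forall>t\<in>T. Good (configs {1..N}) (J_op N n) B (\<lambda>x y. \<psi> t x * cnj (\<psi> t y))"
    proof
      fix t assume t: "t \<in> T"
      have unit: "\<forall>A\<in>L. ipS (configs A) (E A (t A)) (E A (t A)) = 1"
        using t Eu unfolding T_def by (auto simp: PiE_def)
      show "Good (configs {1..N}) (J_op N n) B (\<lambda>x y. \<psi> t x * cnj (\<psi> t y))"
        unfolding \<psi>_def by (rule pure_prod_good[OF nn pf(1) pf(2) pf(3) unit bd])
    qed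
    show "\<forall>x\<in>configs {1..N}. \<forall>y\<in>configs {1..N}. prod_op L r x y = (\<Sum>t\<in>T. complex_of_real (W t) * (\<psi> t x * cnj (\<psi> t y)))"
    proof (intro ballI)
      fix x y assume x: "x \<in> configs {1..N}" and y: "y \<in> configs {1..N}"
      have "prod_op L r x y = (\<Prod>A\<in>L. \<Sum>k\<in>configs A. complex_of_real (Mu A k) * E A k (restr x A) * cnj (E A k (restr y A)))"
        unfolding prod_op_def using Ed restr_configs by (intro prod.cong refl, blast)
      also have "\<dots> = (\<Sum>t\<in>T. \<Prod>A\<in>L. complex_of_real (Mu A (t A)) * E A (t A) (restr x A) * cnj (E A (t A) (restr y A)))"
        unfolding T_def using pf(1,4) configs_finite by (intro prod_sum_PiE, auto)
      also have "\<dots> = (\<Sum>t\<in>T. complex_of_real (W t) * (\<psi> t x * cnj (\<psi> t y)))"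
        unfolding W_def \<psi>_def prodvec_def by (simp add: prod.distrib mult.assoc)
      finally show "prod_op L r x y = (\<Sum>t\<in>T. complex_of_real (W t) * (\<psi> t x * cnj (\<psi> t y)))" .
    qed
  qed
qed

lemma sep_good:
  fixes n :: "real^3"
  assumes nn: "norm n = 1" and P: "is_partition N L" and bd: "(\<Sum>A\<in>L. real (card A ^ 2)) \<le> B"
    and sep: "sep_wrt N L s"
  shows "Good (configs {1..N}) (J_op N n) B s"
proof -
  obtain G :: "nat set" and p :: "nat \<Rightarrow> real" and r :: "nat \<Rightarrow> nat set \<Rightarrow> qop" where GG: "finite G \<and> (\<forall>g\<in>G. p g \<ge> 0) \<and> (\<Sum>g\<in>G. p g) = 1
    \<and> (\<forall>g\<in>G. \<forall>A\<in>L. is_state A (r g A))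
    \<and> (\<forall>x\<in>configs {1..N}. \<forall>y\<in>configs {1..N}. s x y = (\<Sum>g\<in>G. complex_of_real (p g) * prod_op L (r g) x y))"
    using sep unfolding sep_wrt_def by (elim exE) (rule that, assumption)
  note G = conjunct1[OF GG] conjunct1[OF conjunct2[OF GG]] conjunct1[OF conjunct2[OF conjunct2[OF GG]]]
    conjunct1[OF conjunct2[OF conjunct2[OF conjunct2[OF GG]]]] conjunct2[OF conjunct2[OF conjunct2[OF conjunct2[OF GG]]]]
  show ?thesis
  proof (rule Good_convex[OF G(1) G(2) G(3) _ G(5)])
    show "\<forall>g\<in>G. Good (configs {1..N}) (J_op N n) B (prod_op L (r g))"
      using prodop_good[OF nn P _ bd] G(4) by blast
  qed
qed

lemma wh_good:
  fixes n :: "real^3"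
  assumes nn: "norm n = 1" and wh: "wh_sep N w h \<rho>"
  shows "Good (configs {1..N}) (J_op N n) (real w * (real N - real h) + real N) \<rho>"
proof -
  obtain K :: "nat set" and P :: "nat \<Rightarrow> real" and L :: "nat \<Rightarrow> nat set set" and s :: "nat \<Rightarrow> qop" where KK: "finite K \<and> (\<forall>k\<in>K. P k \<ge> 0) \<and> (\<Sum>k\<in>K. P k) = 1
    \<and> (\<forall>k\<in>K. is_partition N (L k) \<and> max_block (L k) \<le> w \<and> card (L k) \<ge> h \<and> sep_wrt N (L k) (s k))
    \<and> (\<forall>x\<in>configs {1..N}. \<forall>y\<in>configs {1..N}. \<rho> x y = (\<Sum>k\<in>K. complex_of_real (P k) * s k x y))"
    using wh unfolding wh_sep_def by (elim exE) (rule that, assumption)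
  note K = conjunct1[OF KK] conjunct1[OF conjunct2[OF KK]] conjunct1[OF conjunct2[OF conjunct2[OF KK]]]
    conjunct1[OF conjunct2[OF conjunct2[OF conjunct2[OF KK]]]] conjunct2[OF conjunct2[OF conjunct2[OF conjunct2[OF KK]]]]
  show ?thesis
  proof (rule Good_convex[OF K(1) K(2) K(3) _ K(5)])
    show "\<forall>k\<in>K. Good (configs {1..N}) (J_op N n) (real w * (real N - real h) + real N) (s k)"
    proof
      fix k assume k: "k \<in> K"
      have Pk: "is_partition N (L k)" and mk: "max_block (L k) \<le> w" and hk: "card (L k) \<ge> h"
        and sk: "sep_wrt N (L k) (s k)" using K(4) k by blast+
      show "Good (configs {1..N}) (J_op N n) (real w * (real N - real h) + real N) (s k)"
        by (rule sep_good[OF nn Pk partition_bound[OF Pk mk hk] sk])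
    qed
  qed
qed

theorem mainTheorem1:
  fixes N w h :: nat and \<rho> :: qop and n :: "real^3"
  assumes "N \<ge> 1" and "w \<ge> 1" and "h \<ge> 1"
    and "real N / real h \<le> real w" and "real w \<le> real N - real h + 1"
    and "wh_sep N w h \<rho>"
    and "norm n = 1"
  shows "QFI N \<rho> (J_op N n) \<le> real w * (real N - real h) + real N"
proof -
  define S where "S = configs {1..N}"
  define B where "B = real w * (real N - real h) + real N"
  have G: "Good S (J_op N n) B \<rho>" unfolding S_def B_def by (rule wh_good[OF assms(7) assms(6)])
  have finS: "finite S" unfolding S_def by (rule configs_finite, simp)
  have h\<rho>: "\<forall>x\<in>S. \<forall>y\<in>S. \<rho> x y = cnj (\<rho> y x)" using G unfolding Good_def hermS_def by blast
  have ex: "\<exists>d. is_eigdec N \<rho> (fst d) (snd d)"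
  proof -
    obtain e lam where el: "(\<forall>k\<in>S. \<forall>l\<in>S. (\<Sum>x\<in>S. cnj (e k x) * e l x) = (if k = l then 1 else 0)) \<and>
     (\<forall>x\<in>S. \<forall>y\<in>S. \<rho> x y = (\<Sum>k\<in>S. complex_of_real (lam k) * e k x * cnj (e k y)))"
      using spectral_ind[OF finS refl h\<rho>] by blast
    show ?thesis using el unfolding is_eigdec_def S_def by (intro exI[of _ "(e, lam)"], simp)
  qed
  define d where "d = (SOME d. is_eigdec N \<rho> (fst d) (snd d))"
  have ed: "is_eigdec N \<rho> (fst d) (snd d)" unfolding d_def by (rule someI_ex[OF ex])
  define e where "e = fst d"
  define lam where "lam = snd d"
  have orth: "\<forall>k\<in>S. \<forall>l\<in>S. (\<Sum>x\<in>S. cnj (e k x) * e l x) = (if k = l then 1 else 0)"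
    and dec: "\<forall>x\<in>S. \<forall>y\<in>S. \<rho> x y = (\<Sum>k\<in>S. complex_of_real (lam k) * e k x * cnj (e k y))"
    using ed unfolding is_eigdec_def S_def e_def lam_def by blast+
  have hJ: "hermS S (J_op N n)" unfolding hermS_def using J_herm by blast
  have Q: "QFI N \<rho> (J_op N n) = 2 * (\<Sum>k\<in>S. \<Sum>l\<in>S. if lam k + lam l > 0
      then (lam k - lam l)^2 / (lam k + lam l) * (cmod (\<Sum>x\<in>S. \<Sum>y\<in>S. cnj (e k x) * J_op N n x y * e l y))^2 else 0)"
    unfolding QFI_def Let_def d_def[symmetric] e_def lam_def S_def melem_def by (rule refl)
  obtain X where X: "hermS S X" and XQ: "2 * (\<Sum>k\<in>S. \<Sum>l\<in>S. if lam k + lam l > 0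
      then (lam k - lam l)^2 / (lam k + lam l) * (cmod (\<Sum>x\<in>S. \<Sum>y\<in>S. cnj (e k x) * J_op N n x y * e l y))^2 else 0)
      = Phi S (J_op N n) X \<rho>"
    using QFI_sum_eq[OF finS orth dec hJ] by blast
  have "QFI N \<rho> (J_op N n) = Phi S (J_op N n) X \<rho>" unfolding Q XQ by (rule refl)
  also have "\<dots> \<le> B" using G X unfolding Good_def by blast
  finally show ?thesis unfolding B_def .
qed

end
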